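(* For every $n\ge1$, $k\ge 1$ and $\lambda\vdash n$, $$s_\lambda\!\left[\frac{1}{(1-q_1)\cdots(1-q_k)}\right]=\frac{\sum_{T\in\mathrm{SYT}(\lambda)}\sum_{\vec{\sigma}\in S_n^{\times(k-1)}} q_1^{\mathrm{comaj}^1_T(\vec{\sigma})}\cdots q_k^{\mathrm{comaj}^k_T(\vec{\sigma})}}{(q_1;q_1)_n\cdots(q_k;q_k)_n}.$$
   Context: $s_\lambda[1/((1-q_1)\cdots(1-q_k))]$ denotes the Schur function $s_\lambda$ evaluated at the infinitely many variables given by all monomials $q_1^{a_1}\cdots q_k^{a_k}$, $(a_1,\dots,a_k)\in\mathbb{N}^k$ (a formal power series). $(q;t)_r=(1-q)(1-qt)\cdots(1-qt^{r-1})$. $\mathrm{SYT}(\lambda)$ is the set of standard Young tableaux of shape $\lambda$; $\epsilon$ is the identity of $S_n$. Definitions. $\mathbb{N}=\{0,1,2,\dots\}$. Sequences in $\mathbb{N}^r$ are compared lexicographically. For $R\subseteq\{1,\dots,n-1\}$ and distinct $a,b\in\{1,\dots,n\}$, write $a\sim_R b$ if all of $\min(a,b),\dots,\max(a,b)-1$ lie in $R$. For $S=(s^1,\dots,s^n)\in(\mathbb{N}^r)^n$ (if $r=0$, all $s^i$ are empty and equal) and $\sigma=\sigma_1\cdots\sigma_n\in S_n$, $\mathrm{Des}_{R,S}(\sigma)$ is the set of $i\in\{1,\dots,n-1\}$ such that either $s^{\sigma_i}>s^{\sigma_{i+1}}$, or $s^{\sigma_i}=s^{\sigma_{i+1}}$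 and either ($\sigma_{i+1}<\sigma_i$ and not $\sigma_{i+1}\sim_R\sigma_i$) or ($\sigma_{i+1}>\sigma_i$ and $\sigma_i\sim_R\sigma_{i+1}$). $\mathrm{Comaj}_{R,S}(\sigma)=\sum_{i\in\mathrm{Des}_{R,S}(\sigma)}(n-i)$. $Z_{R,\sigma}(S)=(z^1,\dots,z^n)\in(\mathbb{N}^{r+1})^n$, where $z^j$ is $s^j$ with a first coordinate $z^j_1$ prepended, $z^{\sigma_i}_1=\#\{j<i: j\in\mathrm{Des}_{R,S}(\sigma)\}$. For $\vec{\pi}=(\pi^1,\dots,\pi^{k-1})\in S_n^{\times(k-1)}$ set $\pi^k=\epsilon$, $Z^0=$ list of $n$ empty sequences, $Z^i=Z_{R,\pi^i}(Z^{i-1})$, and $\mathrm{comaj}^i_R(\vec{\pi})=\mathrm{Comaj}_{R,Z^{i-1}}(\pi^i)$ for $1\le i\le k$. For a standard tableau $T$ with $n$ cells, $\mathrm{des}(T)$ is the set of $i$ such that $i+1$ lies in a strictly lower row than $i$ (English notation), and $\mathrm{comaj}^i_T=\mathrm{comaj}^i_{\mathrm{des}(T)}$. *)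

theory Defs
  imports "HOL-Combinatorics.Permutations" "HOL-Computational_Algebra.Polynomial"
begin

definition is_partition :: "nat \<Rightarrow> nat list \<Rightarrow> bool" where
  "is_partition n la \<longleftrightarrow> sorted_wrt (\<ge>) la \<and> 0 \<notin> set la \<and> sum_list la = n"

definition cells :: "nat list \<Rightarrow> (nat \<times> nat) set" where
  "cells la = {(i, j). i < length la \<and> j < la ! i}"

text \<open>A standard tableau is a bijection from the cells onto {1..n}, increasing along rows
  and down columns; it is fixed to 0 outside the diagram so that SYT(lambda) is a finite set.\<close>
definition is_syt :: "nat \<Rightarrow> nat list \<Rightarrow> (nat \<times> nat \<Rightarrow> nat) \<Rightarrow> bool" where
  "is_syt n la T \<longleftrightarrow> bij_betw T (cells la) {1..n}
     \<and> (\<forall>c. c \<notin> cells la \<longrightarrow> T c = 0)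
     \<and> (\<forall>i j. (i, Suc j) \<in> cells la \<longrightarrow> T (i, j) < T (i, Suc j))
     \<and> (\<forall>i j. (Suc i, j) \<in> cells la \<longrightarrow> T (i, j) < T (Suc i, j))"

definition SYT :: "nat \<Rightarrow> nat list \<Rightarrow> (nat \<times> nat \<Rightarrow> nat) set" where
  "SYT n la = {T. is_syt n la T}"

definition syt_des :: "nat \<Rightarrow> nat list \<Rightarrow> (nat \<times> nat \<Rightarrow> nat) \<Rightarrow> nat set" where
  "syt_des n la T = {i \<in> {1..n-1}.
      fst (inv_into (cells la) T i) < fst (inv_into (cells la) T (Suc i))}"

definition is_ssyt :: "nat list \<Rightarrow> (nat \<times> nat \<Rightarrow> nat) \<Rightarrow> bool" where
  "is_ssyt la T \<longleftrightarrow> (\<forall>c. c \<notin> cells la \<longrightarrow> T c = 0)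
     \<and> (\<forall>i j. (i, Suc j) \<in> cells la \<longrightarrow> T (i, j) \<le> T (i, Suc j))
     \<and> (\<forall>i j. (Suc i, j) \<in> cells la \<longrightarrow> T (i, j) < T (Suc i, j))"

text \<open>Multivariate formal power series in q_1..q_k are represented by their coefficient
  functions: a coefficient for each exponent vector (a nat list of length k).\<close>
type_synonym mps = "nat list \<Rightarrow> int"

definition mps_mult :: "nat \<Rightarrow> mps \<Rightarrow> mps \<Rightarrow> mps" where
  "mps_mult k f g e =
     (\<Sum>a\<in>{a. length a = k \<and> list_all2 (\<le>) a e}. f a * g (map2 (-) e a))"

text \<open>s_lambda evaluated at the alphabet of all monomials q^a, a in N^k.  The variables
  x_0, x_1, ... of the Schur function are the monomials q^(enum m), where enum is an enumeration
  (bijection) of N^k; s_lambda = sum over SSYT T of prod_c x_(T c), so the coefficient of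
  q^e counts SSYT T with sum_c enum (T c) = e.\<close>
definition schur_at :: "nat list \<Rightarrow> nat \<Rightarrow> (nat \<Rightarrow> nat list) \<Rightarrow> mps" where
  "schur_at la k enum e = int (card {T. is_ssyt la T \<and>
      (\<forall>i<k. (\<Sum>c\<in>cells la. enum (T c) ! i) = e ! i)})"

definition qpoch :: "nat \<Rightarrow> int poly" where
  "qpoch n = (\<Prod>j\<in>{1..n}. 1 - monom 1 j)"

definition qpoch_denom :: "nat \<Rightarrow> nat \<Rightarrow> mps" where
  "qpoch_denom k n e = (\<Prod>i<k. coeff (qpoch n) (e ! i))"

definition lex_less :: "nat list \<Rightarrow> nat list \<Rightarrow> bool" where
  "lex_less xs ys \<longleftrightarrow> (xs, ys) \<in> lexord {(a, b). a < b}"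

definition sim :: "nat set \<Rightarrow> nat \<Rightarrow> nat \<Rightarrow> bool" where
  "sim R a b \<longleftrightarrow> a \<noteq> b \<and> (\<forall>j. min a b \<le> j \<and> j < max a b \<longrightarrow> j \<in> R)"

text \<open>sigma is a permutation of {1..n}, sigma_i = sigma i; S j is the sequence s^j.\<close>
definition Des :: "nat set \<Rightarrow> nat \<Rightarrow> (nat \<Rightarrow> nat list) \<Rightarrow> (nat \<Rightarrow> nat) \<Rightarrow> nat set" where
  "Des R n S \<sigma> = {i \<in> {1..n-1}.
      lex_less (S (\<sigma> (Suc i))) (S (\<sigma> i))
      \<or> (S (\<sigma> i) = S (\<sigma> (Suc i)) \<and>
          ((\<sigma> (Suc i) < \<sigma> i \<and> \<not> sim R (\<sigma> (Suc i)) (\<sigma> i))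
           \<or> (\<sigma> (Suc i) > \<sigma> i \<and> sim R (\<sigma> i) (\<sigma> (Suc i)))))}"

definition Comaj :: "nat set \<Rightarrow> nat \<Rightarrow> (nat \<Rightarrow> nat list) \<Rightarrow> (nat \<Rightarrow> nat) \<Rightarrow> nat" where
  "Comaj R n S \<sigma> = (\<Sum>i\<in>Des R n S \<sigma>. n - i)"

definition Zmap :: "nat set \<Rightarrow> nat \<Rightarrow> (nat \<Rightarrow> nat) \<Rightarrow> (nat \<Rightarrow> nat list) \<Rightarrow> (nat \<Rightarrow> nat list)" where
  "Zmap R n \<sigma> S j = card {j' \<in> Des R n S \<sigma>. j' < inv \<sigma> j} # S j"

text \<open>Z^0, Z^1, ... for a list of permutations ps (0-indexed: ps ! (i-1) is pi^i).\<close>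
fun Zseq :: "nat set \<Rightarrow> nat \<Rightarrow> (nat \<Rightarrow> nat) list \<Rightarrow> nat \<Rightarrow> (nat \<Rightarrow> nat list)" where
  "Zseq R n ps 0 = (\<lambda>_. [])"
| "Zseq R n ps (Suc i) = Zmap R n (ps ! i) (Zseq R n ps i)"

text \<open>(comaj^1_R(pi), ..., comaj^k_R(pi)) for pi = (pi^1..pi^(k-1)) given as a list,
  with pi^k = identity appended.\<close>
definition comaj_vec :: "nat set \<Rightarrow> nat \<Rightarrow> nat \<Rightarrow> (nat \<Rightarrow> nat) list \<Rightarrow> nat list" where
  "comaj_vec R n k ps =
     (let qs = ps @ [id] in map (\<lambda>i. Comaj R n (Zseq R n qs i) (qs ! i)) [0..<k])"

definition perm_tuples :: "nat \<Rightarrow> nat \<Rightarrow> (nat \<Rightarrow> nat) list set" where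
  "perm_tuples n m = {ps. length ps = m \<and> (\<forall>p\<in>set ps. p permutes {1..n})}"

definition numer :: "nat list \<Rightarrow> nat \<Rightarrow> nat \<Rightarrow> mps" where
  "numer la k n e = int (card {(T, ps). T \<in> SYT n la \<and> ps \<in> perm_tuples n (k - 1)
       \<and> comaj_vec (syt_des n la T) n k ps = e})"

end

theory Submission
  imports Defs "HOL-Computational_Algebra.Polynomial_FPS"
begin

definition wset :: "nat \<Rightarrow> nat \<Rightarrow> nat list set" where
  "wset n m = {xs. length xs = n \<and> sorted xs \<and> sum_list xs = m}"

definition wil :: "nat \<Rightarrow> nat \<Rightarrow> nat" where
  "wil n m = card (wset n m)"

lemma wset_finite: "finite (wset n m)"
proof -
  have "wset n m \<subseteq> {xs. set xs \<subseteq> {0..m} \<and> length xs = n}"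
    unfolding wset_def using member_le_sum_list by fastforce
  thus ?thesis using finite_lists_length_eq[of "{0..m}" n] finite_subset by auto
qed

lemma wset_0: "wset 0 m = (if m = 0 then {[]} else {})"
  unfolding wset_def by auto

lemma wset_Suc: "wset (Suc n) m = Cons 0 ` wset n m \<union>
   (if Suc n \<le> m then map Suc ` wset (Suc n) (m - Suc n) else {})"
proof (intro set_eqI iffI)
  fix xs assume xs: "xs \<in> wset (Suc n) m"
  then obtain y ys where xs_eq: "xs = y # ys" unfolding wset_def by (cases xs) auto
  show "xs \<in> Cons 0 ` wset n m \<union> (if Suc n \<le> m then map Suc ` wset (Suc n) (m - Suc n) else {})"
  proof (cases y)
    case 0
    then show ?thesis using xs xs_eq unfolding wset_def by auto
  next
    case (Suc z)
    have pos: "\<forall>x\<in>set xs. x > 0" using xs xs_eq Suc unfolding wset_def by auto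
    define zs where "zs = map (\<lambda>x. x - 1) xs"
    have xs_zs: "xs = map Suc zs" unfolding zs_def using pos by (induct xs) auto
    have "sum_list xs = sum_list zs + length zs" unfolding xs_zs by (induct zs) auto
    moreover have "length zs = Suc n" using xs unfolding zs_def wset_def by auto
    moreover have "sorted zs" using xs unfolding xs_zs wset_def by (simp add: sorted_map)
    ultimately have "zs \<in> wset (Suc n) (m - Suc n)" "Suc n \<le> m" using xs unfolding wset_def by auto
    then show ?thesis using xs_zs by auto
  qed
next
  fix xs assume "xs \<in> Cons 0 ` wset n m \<union> (if Suc n \<le> m then map Suc ` wset (Suc n) (m - Suc n) else {})"
  then show "xs \<in> wset (Suc n) m"
  proof
    assume "xs \<in> Cons 0 ` wset n m" then show ?thesis unfolding wset_def by auto
  next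
    assume a: "xs \<in> (if Suc n \<le> m then map Suc ` wset (Suc n) (m - Suc n) else {})"
    then have le: "Suc n \<le> m" by (auto split: if_splits)
    then obtain zs where zs: "zs \<in> wset (Suc n) (m - Suc n)" "xs = map Suc zs" using a by auto
    have "sum_list (map Suc zs) = sum_list zs + length zs" by (induct zs) auto
    then show ?thesis using zs le unfolding wset_def by (auto simp: sorted_map)
  qed
qed

lemma wil_0: "wil 0 m = (if m = 0 then 1 else 0)"
  unfolding wil_def wset_0 by auto

lemma wil_Suc: "wil (Suc n) m = wil n m + (if Suc n \<le> m then wil (Suc n) (m - Suc n) else 0)"
proof -
  have d: "Cons 0 ` wset n m \<inter> (if Suc n \<le> m then map Suc ` wset (Suc n) (m - Suc n) else {}) = {}"
    by auto
  have "wil (Suc n) m = card (Cons 0 ` wset n m) + card (if Suc n \<le> m then map Suc ` wset (Suc n) (m - Suc n) else {})"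
    unfolding wil_def
    by (subst wset_Suc, rule card_Un_disjoint) (use wset_finite d in simp_all)
  also have "card (Cons 0 ` wset n m) = wil n m" unfolding wil_def
    by (rule card_image) auto
  also have "card (if Suc n \<le> m then map Suc ` wset (Suc n) (m - Suc n) else {}) =
     (if Suc n \<le> m then wil (Suc n) (m - Suc n) else 0)"
    unfolding wil_def by (auto intro!: card_image simp: inj_on_def)
  finally show ?thesis .
qed

definition Gf :: "nat \<Rightarrow> int fps" where
  "Gf n = Abs_fps (\<lambda>m. int (wil n m))"

lemma Gf_0: "Gf 0 = 1"
  by (rule fps_ext) (simp add: Gf_def wil_0)

lemma Gf_Suc: "Gf (Suc n) = Gf n + fps_X ^ Suc n * Gf (Suc n)"
  proof (rule fps_ext)
  fix m show "fps_nth (Gf (Suc n)) m = fps_nth (Gf n + fps_X ^ Suc n * Gf (Suc n)) m"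
    unfolding fps_add_nth fps_X_power_mult_nth using wil_Suc[of n m] by (simp add: Gf_def)
qed

lemma qpoch_Suc: "qpoch (Suc n) = qpoch n * (1 - monom 1 (Suc n))"
  unfolding qpoch_def by (simp add: prod.nat_ivl_Suc')

lemma qpoch_Gf: "fps_of_poly (qpoch n) * Gf n = 1"
proof (induct n)
  case 0
  then show ?case by (simp add: qpoch_def Gf_0)
next
  case (Suc n)
  have "(1 - fps_X ^ Suc n) * Gf (Suc n) = Gf n"
    using Gf_Suc[of n] by (simp add: algebra_simps)
  then show ?case
    unfolding qpoch_Suc fps_of_poly_mult fps_of_poly_diff fps_of_poly_monom'
    using Suc by (simp add: mult.assoc)
qed

lemma wil_conv:
  "(\<Sum>c=0..d. int (wil n c) * coeff (qpoch n) (d - c)) = (if d = 0 then 1 else 0)"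
proof -
  have "fps_nth (Gf n * fps_of_poly (qpoch n)) d = fps_nth (1::int fps) d"
    using qpoch_Gf[of n] by (simp add: mult.commute)
  then show ?thesis by (simp add: fps_mult_nth Gf_def)
qed


definition compat :: "nat \<Rightarrow> nat set \<Rightarrow> (nat \<Rightarrow> nat) \<Rightarrow> bool" where
  "compat n D h \<longleftrightarrow> (\<forall>j\<in>{1..n-1}. h j \<le> h (Suc j) \<and> (j \<in> D \<longrightarrow> h j < h (Suc j)))"

definition cset :: "nat \<Rightarrow> nat set \<Rightarrow> nat \<Rightarrow> (nat \<Rightarrow> nat) set" where
  "cset n D m = {h \<in> {1..n} \<rightarrow>\<^sub>E UNIV. compat n D h \<and> sum h {1..n} = m}"

definition dc :: "nat set \<Rightarrow> nat \<Rightarrow> nat" where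
  "dc D j = card {i\<in>D. i < j}"

lemma dc_Suc: "finite D \<Longrightarrow> dc D (Suc j) = dc D j + (if j \<in> D then 1 else 0)"
proof -
  assume f: "finite D"
  have "{i\<in>D. i < Suc j} = {i\<in>D. i < j} \<union> (if j \<in> D then {j} else {})" by (auto simp: less_Suc_eq)
  then show ?thesis unfolding dc_def using f by (auto simp: card_insert_if)
qed

lemma compat_ge_dc:
  assumes "finite D" "compat n D h" "j \<in> {1..n}" "0 \<notin> D"
  shows "dc D j \<le> h j \<and> (Suc j \<le> n \<longrightarrow> h j - dc D j \<le> h (Suc j) - dc D (Suc j))"
  using assms(3)
proof (induct j)
  case 0 then show ?case by simp
next
  case (Suc j)
  have base: "dc D (Suc j) \<le> h (Suc j)"
  proof (cases "j = 0")
    case True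
    have e: "{i\<in>D. i < Suc 0} = {}" using assms(4) by auto
    have "dc D (Suc 0) = 0" unfolding dc_def e by simp
    then show ?thesis using True by simp
  next
    case False
    then have "dc D j \<le> h j" "h j \<le> h (Suc j)" "j \<in> D \<longrightarrow> h j < h (Suc j)"
      using Suc assms(2) unfolding compat_def by auto
    then show ?thesis using dc_Suc[OF assms(1), of j] by auto
  qed
  show ?case
  proof (intro conjI impI base)
    assume "Suc (Suc j) \<le> n"
    then have "h (Suc j) \<le> h (Suc (Suc j))" "Suc j \<in> D \<longrightarrow> h (Suc j) < h (Suc (Suc j))"
      using assms(2) Suc unfolding compat_def by auto
    then show "h (Suc j) - dc D (Suc j) \<le> h (Suc (Suc j)) - dc D (Suc (Suc j))"
      using dc_Suc[OF assms(1), of "Suc j"] base by auto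
  qed
qed

lemma dc_sum_form: "finite D \<Longrightarrow> dc D j = (\<Sum>i\<in>D. if i < j then 1 else 0)"
  unfolding dc_def by (simp add: sum.If_cases Int_def)

lemma sum_dc:
  assumes "finite D" "D \<subseteq> {1..n-1}"
  shows "sum (dc D) {1..n} = (\<Sum>i\<in>D. n - i)"
proof -
  have "sum (dc D) {1..n} = (\<Sum>j\<in>{1..n}. \<Sum>i\<in>D. if i < j then 1 else 0)"
    using dc_sum_form[OF assms(1)] by simp
  also have "\<dots> = (\<Sum>i\<in>D. \<Sum>j\<in>{1..n}. if i < j then 1 else 0)" by (rule sum.swap)
  also have "\<dots> = (\<Sum>i\<in>D. n - i)"
  proof (rule sum.cong[OF refl])
    fix i assume "i \<in> D"
    then have "i \<in> {1..n-1}" using assms(2) by blast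
    then have i: "1 \<le> i" "i \<le> n" by auto
    have "{j\<in>{1..n}. i < j} = {Suc i..n}" using i by auto
    then show "(\<Sum>j\<in>{1..n}. if i < j then 1 else 0) = n - i"
      by (simp add: sum.If_cases Int_def)
  qed
  finally show ?thesis .
qed

definition cmj :: "nat \<Rightarrow> nat set \<Rightarrow> nat" where
  "cmj n D = (\<Sum>i\<in>D. n - i)"

lemma sum_upto_list: "sum f {1..n} = sum_list (map f [1..<Suc n])"
proof -
  have "set [1..<Suc n] = {1..n}" by auto
  then show ?thesis by (metis sum_set_upt_conv_sum_list_nat)
qed

lemma card_cset:
  assumes D: "D \<subseteq> {1..n-1}"
  shows "card (cset n D m) = (if cmj n D \<le> m then wil n (m - cmj n D) else 0)"
proof -
  have fD: "finite D" using D finite_subset by blast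
  have D0: "0 \<notin> D" using D by auto
  define F where "F h = map (\<lambda>j. h j - dc D j) [1..<Suc n]" for h :: "nat \<Rightarrow> nat"
  define G where "G xs = (\<lambda>j. if j \<in> {1..n} then xs ! (j - 1) + dc D j else undefined)" for xs :: "nat list"
  have sdc: "sum (dc D) {1..n} = cmj n D" unfolding cmj_def using sum_dc[OF fD D] .
  have ge: "dc D j \<le> h j" if "h \<in> cset n D m" "j \<in> {1..n}" for h j
    using compat_ge_dc[OF fD _ that(2) D0, of h] that(1) unfolding cset_def by auto
  have cm_le: "cmj n D \<le> m" if "h \<in> cset n D m" for h
  proof -
    have "sum (dc D) {1..n} \<le> sum h {1..n}" by (rule sum_mono) (use ge that in auto)
    then show ?thesis using that sdc unfolding cset_def by auto
  qed
  have F_in: "F h \<in> wset n (m - cmj n D)" if h: "h \<in> cset n D m" for h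
  proof -
    have "sorted (F h)" unfolding sorted_iff_nth_Suc
    proof (intro allI impI)
      fix i assume "Suc i < length (F h)"
      then have i: "Suc i < n" unfolding F_def by (simp del: upt_Suc)
      have "h (Suc i) - dc D (Suc i) \<le> h (Suc (Suc i)) - dc D (Suc (Suc i))"
        using compat_ge_dc[OF fD _ _ D0, of n h "Suc i"] h i unfolding cset_def by auto
      then show "F h ! i \<le> F h ! Suc i" unfolding F_def using i
        by (simp add: nth_append del: upt_Suc)
    qed
    moreover have "sum_list (F h) = m - cmj n D"
    proof -
      have "sum_list (F h) = (\<Sum>j\<in>{1..n}. h j - dc D j)" unfolding F_def sum_upto_list ..
      also have "\<dots> = sum h {1..n} - sum (dc D) {1..n}"
        by (rule sum_subtractf_nat) (use ge h in auto)
      finally show ?thesis using h sdc unfolding cset_def by simp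
    qed
    ultimately show ?thesis unfolding wset_def F_def by simp
  qed
  have G_in: "G xs \<in> cset n D m" if xs: "xs \<in> wset n (m - cmj n D)" and cm: "cmj n D \<le> m" for xs
  proof -
    have len: "length xs = n" and so: "sorted xs" and sl: "sum_list xs = m - cmj n D"
      using xs unfolding wset_def by auto
    have "compat n D (G xs)" unfolding compat_def
    proof
      fix j assume j: "j \<in> {1..n-1}"
      have a: "xs ! (j - 1) \<le> xs ! j" using sorted_nth_mono[OF so, of "j-1" j] len j by auto
      show "G xs j \<le> G xs (Suc j) \<and> (j \<in> D \<longrightarrow> G xs j < G xs (Suc j))"
        using j a dc_Suc[OF fD, of j] unfolding G_def by auto
    qed
    moreover have "sum (G xs) {1..n} = m"
    proof -
      have "sum (G xs) {1..n} = (\<Sum>j\<in>{1..n}. xs ! (j - 1) + dc D j)"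
        unfolding G_def by (rule sum.cong) auto
      also have "\<dots> = (\<Sum>j\<in>{1..n}. xs ! (j - 1)) + cmj n D" using sdc by (simp only: sum.distrib)
      also have "(\<Sum>j\<in>{1..n}. xs ! (j - 1)) = sum_list xs"
        unfolding sum_list_sum_nth len using sum.atLeast1_atMost_eq[of "\<lambda>j. xs ! (j - 1)" n]
        by (simp add: atLeast0LessThan)
      finally show ?thesis using sl cm by simp
    qed
    moreover have "G xs \<in> {1..n} \<rightarrow>\<^sub>E UNIV" unfolding G_def by auto
    ultimately show ?thesis unfolding cset_def by simp
  qed
  show ?thesis
  proof (cases "cmj n D \<le> m")
    case False
    then have "cset n D m = {}" using cm_le by auto
    then show ?thesis using False by simp
  next
    case True
    have "bij_betw F (cset n D m) (wset n (m - cmj n D))"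
    proof (rule bij_betw_byWitness[where f' = G])
      show "\<forall>h\<in>cset n D m. G (F h) = h"
      proof
        fix h assume h: "h \<in> cset n D m"
        show "G (F h) = h"
        proof
          fix j show "G (F h) j = h j"
          proof (cases "j \<in> {1..n}")
            case True
            then show ?thesis unfolding G_def F_def using ge[OF h True]
              by (auto simp: nth_append simp del: upt_Suc)
          next
            case False
            then show ?thesis using h unfolding G_def cset_def by (auto simp: PiE_def extensional_def)
          qed
        qed
      qed
      show "\<forall>xs\<in>wset n (m - cmj n D). F (G xs) = xs"
      proof
        fix xs assume xs: "xs \<in> wset n (m - cmj n D)"
        then have len: "length xs = n" unfolding wset_def by auto
        show "F (G xs) = xs"
          by (rule nth_equalityI) (auto simp: F_def G_def len simp del: upt_Suc)
      qed
      show "F ` cset n D m \<subseteq> wset n (m - cmj n D)" using F_in by auto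
      show "G ` wset n (m - cmj n D) \<subseteq> cset n D m" using G_in True by auto
    qed
    then show ?thesis using True bij_betw_same_card unfolding wil_def by fastforce
  qed
qed


lemma lex_less_Nil_left[simp]: "lex_less [] ys \<longleftrightarrow> ys \<noteq> []"
  unfolding lex_less_def by (cases ys) auto

lemma lex_less_Nil_right[simp]: "\<not> lex_less xs []"
  unfolding lex_less_def by simp

lemma lex_less_Cons_Cons[simp]: "lex_less (x # xs) (y # ys) \<longleftrightarrow> x < y \<or> (x = y \<and> lex_less xs ys)"
  unfolding lex_less_def by simp

lemma lex_less_append_same_len:
  "length xs = length ys \<Longrightarrow>
   lex_less (xs @ us) (ys @ vs) \<longleftrightarrow> lex_less xs ys \<or> (xs = ys \<and> lex_less us vs)"
proof (induct xs arbitrary: ys)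
  case Nil then show ?case by simp
next
  case (Cons x xs)
  then obtain y ys' where "ys = y # ys'" by (cases ys) auto
  then show ?case using Cons by auto
qed

lemma lex_less_irrefl: "\<not> lex_less xs xs"
  unfolding lex_less_def by (rule lexord_irreflexive) simp

lemma lex_less_trans: "lex_less xs ys \<Longrightarrow> lex_less ys zs \<Longrightarrow> lex_less xs zs"
  unfolding lex_less_def by (rule lexord_trans) (auto simp: trans_def)

lemma lex_less_asym: "lex_less xs ys \<Longrightarrow> \<not> lex_less ys xs"
  using lex_less_trans lex_less_irrefl by blast

lemma lex_less_linear: "lex_less xs ys \<or> xs = ys \<or> lex_less ys xs"
  unfolding lex_less_def by (rule lexord_linear) auto

lemma lex_less_total: "xs \<noteq> ys \<Longrightarrow> \<not> lex_less xs ys \<Longrightarrow> lex_less ys xs"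
  using lex_less_linear by blast

fun bs :: "nat set \<Rightarrow> nat \<Rightarrow> nat" where
  "bs R 0 = 0"
| "bs R (Suc j) = (if j \<in> R then bs R j else Suc j)"

lemma bs_le: "bs R a \<le> a"
  by (induct a) auto

lemma bs_mono: "a \<le> b \<Longrightarrow> bs R a \<le> bs R b"
proof (induct b)
  case 0 then show ?case by simp
next
  case (Suc b)
  then show ?case using bs_le[of R b] by (cases "a = Suc b") (auto simp: le_Suc_eq)
qed

lemma bs_eq_iff: "a \<le> b \<Longrightarrow> bs R a = bs R b \<longleftrightarrow> (\<forall>j. a \<le> j \<and> j < b \<longrightarrow> j \<in> R)"
proof (induct b)
  case 0 then show ?case by simp
next
  case (Suc b)
  show ?case
  proof (cases "a = Suc b")
    case True then show ?thesis by auto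
  next
    case False
    then have ab: "a \<le> b" using Suc by simp
    show ?thesis
    proof (cases "b \<in> R")
      case True
      then show ?thesis using Suc(1)[OF ab] by (auto simp: less_Suc_eq)
    next
      case False
      have "bs R a \<le> b" using bs_le[of R a] ab by simp
      then show ?thesis using False ab by auto
    qed
  qed
qed

lemma sim_iff_bs: "a < b \<Longrightarrow> sim R a b \<longleftrightarrow> bs R a = bs R b"
  unfolding sim_def using bs_eq_iff[of a b R] by auto

definition tlk :: "nat set \<Rightarrow> nat \<Rightarrow> nat \<Rightarrow> nat list" where
  "tlk R n a = [bs R a, n - a]"

definition key :: "nat set \<Rightarrow> nat \<Rightarrow> (nat \<Rightarrow> nat list) \<Rightarrow> nat \<Rightarrow> nat list" where
  "key R n S a = S a @ tlk R n a"

definition before :: "nat set \<Rightarrow> (nat \<Rightarrow> nat list) \<Rightarrow> nat \<Rightarrow> nat \<Rightarrow> bool" where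
  "before R S a b \<longleftrightarrow> lex_less (S a) (S b) \<or> (S a = S b \<and>
      ((a < b \<and> \<not> sim R a b) \<or> (b < a \<and> sim R b a)))"

lemma key_order:
  assumes "a \<in> {1..n}" "b \<in> {1..n}" "a \<noteq> b" "length (S a) = length (S b)"
  shows "lex_less (key R n S a) (key R n S b) \<longleftrightarrow> before R S a b"
proof -
  have "lex_less (key R n S a) (key R n S b) \<longleftrightarrow>
     lex_less (S a) (S b) \<or> (S a = S b \<and> lex_less (tlk R n a) (tlk R n b))"
    unfolding key_def by (rule lex_less_append_same_len[OF assms(4)])
  moreover have "lex_less (tlk R n a) (tlk R n b) \<longleftrightarrow>
      ((a < b \<and> \<not> sim R a b) \<or> (b < a \<and> sim R b a))"
  proof (cases "a < b")
    case True
    then have "bs R a \<le> bs R b" using bs_mono by simp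
    then show ?thesis unfolding tlk_def using True assms sim_iff_bs[OF True, of R] by auto
  next
    case False
    then have ba: "b < a" using assms(3) by simp
    then have "bs R b \<le> bs R a" using bs_mono by simp
    then show ?thesis unfolding tlk_def using ba assms sim_iff_bs[OF ba, of R] by auto
  qed
  ultimately show ?thesis unfolding before_def by simp
qed

definition eqlen :: "nat \<Rightarrow> (nat \<Rightarrow> nat list) \<Rightarrow> bool" where
  "eqlen n S \<longleftrightarrow> (\<forall>a\<in>{1..n}. \<forall>b\<in>{1..n}. length (S a) = length (S b))"

lemma key_inj:
  assumes "eqlen n S" "a \<in> {1..n}" "b \<in> {1..n}" "key R n S a = key R n S b"
  shows "a = b"
proof -
  have "length (S a) = length (S b)" using assms(1-3) unfolding eqlen_def by blast
  then have "tlk R n a = tlk R n b" using assms(4) unfolding key_def by simp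
  then show ?thesis using assms(2,3) unfolding tlk_def by auto
qed

lemma Des_key:
  assumes "\<sigma> permutes {1..n}" "eqlen n S"
  shows "Des R n S \<sigma> = {i\<in>{1..n-1}. lex_less (key R n S (\<sigma> (Suc i))) (key R n S (\<sigma> i))}"
proof -
  have "lex_less (key R n S (\<sigma> (Suc i))) (key R n S (\<sigma> i)) \<longleftrightarrow> before R S (\<sigma> (Suc i)) (\<sigma> i)"
    if i: "i \<in> {1..n-1}" for i
  proof (rule key_order)
    have "Suc i \<in> {1..n}" "i \<in> {1..n}" using i by auto
    then show "\<sigma> (Suc i) \<in> {1..n}" "\<sigma> i \<in> {1..n}" using permutes_in_image[OF assms(1)] by blast+
    then show "length (S (\<sigma> (Suc i))) = length (S (\<sigma> i))" using assms(2) unfolding eqlen_def by blast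
    show "\<sigma> (Suc i) \<noteq> \<sigma> i" using permutes_inj[OF assms(1)] by (metis injD n_not_Suc_n)
  qed
  then show ?thesis unfolding Des_def before_def by auto
qed


lemma perm_range: "\<sigma> permutes {1..n} \<Longrightarrow> x \<in> {1..n} \<Longrightarrow> \<sigma> x \<in> {1..n}"
  by (metis permutes_in_image)

lemma perm_range_inv: "\<sigma> permutes {1..n} \<Longrightarrow> \<sigma> x \<in> {1..n} \<Longrightarrow> x \<in> {1..n}"
  by (metis permutes_in_image)

definition incr :: "nat \<Rightarrow> (nat \<Rightarrow> nat list) \<Rightarrow> (nat \<Rightarrow> nat) \<Rightarrow> bool" where
  "incr n K \<sigma> \<longleftrightarrow> (\<forall>i\<in>{1..n-1}. lex_less (K (\<sigma> i)) (K (\<sigma> (Suc i))))"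

lemma chain_lex:
  assumes "\<And>t. i \<le> t \<Longrightarrow> t < j \<Longrightarrow> lex_less (K (\<sigma> t)) (K (\<sigma> (Suc t)))" "i < j"
  shows "lex_less (K (\<sigma> i)) (K (\<sigma> j))"
  using assms
proof (induct j)
  case 0 then show ?case by simp
next
  case (Suc j)
  show ?case
  proof (cases "i = j")
    case True then show ?thesis using Suc(2)[of j] by simp
  next
    case False
    then have "lex_less (K (\<sigma> i)) (K (\<sigma> j))" using Suc by simp
    moreover have "lex_less (K (\<sigma> j)) (K (\<sigma> (Suc j)))" using Suc False by simp
    ultimately show ?thesis using lex_less_trans by blast
  qed
qed

lemma incr_lt:
  assumes "incr n K \<sigma>" "1 \<le> i" "i < j" "j \<le> n"
  shows "lex_less (K (\<sigma> i)) (K (\<sigma> j))"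
  by (rule chain_lex[OF _ assms(3)]) (use assms(1,2,4) in \<open>auto simp: incr_def\<close>)

lemma incr_iff:
  assumes "incr n K \<sigma>" "i \<in> {1..n}" "j \<in> {1..n}"
  shows "lex_less (K (\<sigma> i)) (K (\<sigma> j)) \<longleftrightarrow> i < j"
proof
  assume l: "lex_less (K (\<sigma> i)) (K (\<sigma> j))"
  show "i < j"
  proof (rule ccontr)
    assume "\<not> i < j"
    then have "j = i \<or> j < i" by auto
    then show False
    proof
      assume "j = i" then show False using l lex_less_irrefl by simp
    next
      assume "j < i" then show False using incr_lt[OF assms(1), of j i] assms l lex_less_asym by auto
    qed
  qed
next
  assume "i < j" then show "lex_less (K (\<sigma> i)) (K (\<sigma> j))" using incr_lt[OF assms(1)] assms by auto
qed

definition rank :: "nat \<Rightarrow> (nat \<Rightarrow> nat list) \<Rightarrow> nat \<Rightarrow> nat" where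
  "rank n K a = Suc (card {b\<in>{1..n}. lex_less (K b) (K a)})"

lemma rank_incr:
  assumes "\<sigma> permutes {1..n}" "incr n K \<sigma>" "i \<in> {1..n}"
  shows "rank n K (\<sigma> i) = i"
proof -
  have "{b\<in>{1..n}. lex_less (K b) (K (\<sigma> i))} = \<sigma> ` {1..<i}"
  proof (intro set_eqI iffI)
    fix b assume b: "b \<in> {b\<in>{1..n}. lex_less (K b) (K (\<sigma> i))}"
    define j where "j = inv \<sigma> b"
    have bj: "b = \<sigma> j" unfolding j_def using permutes_inverses(1)[OF assms(1)] by simp
    have j: "j \<in> {1..n}" using b bj perm_range_inv[OF assms(1), of j] by simp
    have "j < i" using b bj incr_iff[OF assms(2) j assms(3)] by auto
    then show "b \<in> \<sigma> ` {1..<i}" using bj j by auto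
  next
    fix b assume "b \<in> \<sigma> ` {1..<i}"
    then obtain j where j: "j \<in> {1..<i}" "b = \<sigma> j" by auto
    then have jn: "j \<in> {1..n}" using assms(3) by auto
    have "b \<in> {1..n}" using j(2) perm_range[OF assms(1) jn] by simp
    then show "b \<in> {b\<in>{1..n}. lex_less (K b) (K (\<sigma> i))}"
      using incr_iff[OF assms(2) jn assms(3)] j by auto
  qed
  moreover have "card (\<sigma> ` {1..<i}) = i - 1"
    using card_image[OF inj_on_subset[OF permutes_inj[OF assms(1)]]] by simp
  ultimately show ?thesis unfolding rank_def using assms(3) by simp
qed

lemma sort_unique:
  assumes "\<sigma> permutes {1..n}" "incr n K \<sigma>" "\<tau> permutes {1..n}" "incr n K \<tau>"
  shows "\<sigma> = \<tau>"
proof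
  fix i show "\<sigma> i = \<tau> i"
  proof (cases "i \<in> {1..n}")
    case False then show ?thesis using assms permutes_not_in by metis
  next
    case True
    define j where "j = inv \<sigma> (\<tau> i)"
    have tj: "\<tau> i = \<sigma> j" unfolding j_def using permutes_inverses(1)[OF assms(1)] by simp
    have ti: "\<tau> i \<in> {1..n}" using perm_range[OF assms(3) True] .
    have j: "j \<in> {1..n}" using ti tj perm_range_inv[OF assms(1), of j] by simp
    have "j = i" using rank_incr[OF assms(1,2) j] rank_incr[OF assms(3,4) True] tj by simp
    then show ?thesis using tj by simp
  qed
qed

lemma rank_mono:
  assumes "a \<in> {1..n}" "b \<in> {1..n}" "lex_less (K a) (K b)"
  shows "rank n K a < rank n K b"
proof -
  have "{c\<in>{1..n}. lex_less (K c) (K a)} \<subset> {c\<in>{1..n}. lex_less (K c) (K b)}"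
    using assms lex_less_trans lex_less_irrefl by blast
  then show ?thesis unfolding rank_def by (simp add: psubset_card_mono)
qed

lemma sort_exists:
  assumes "inj_on K {1..n}"
  shows "\<exists>\<sigma>. \<sigma> permutes {1..n} \<and> incr n K \<sigma>"
proof -
  have lin: "lex_less (K a) (K b) \<or> lex_less (K b) (K a)" if "a \<in> {1..n}" "b \<in> {1..n}" "a \<noteq> b" for a b
    using lex_less_linear[of "K a" "K b"] assms that inj_onD by metis
  have rng: "rank n K a \<in> {1..n}" if a: "a \<in> {1..n}" for a
  proof -
    have "{b\<in>{1..n}. lex_less (K b) (K a)} \<subseteq> {1..n} - {a}" using lex_less_irrefl by auto
    then have "card {b\<in>{1..n}. lex_less (K b) (K a)} \<le> card ({1..n} - {a})" by (intro card_mono) simp_all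
    then show ?thesis using a unfolding rank_def by auto
  qed
  have inj: "inj_on (rank n K) {1..n}"
  proof (rule inj_onI, rule ccontr)
    fix a b assume a: "a \<in> {1..n}" and b: "b \<in> {1..n}" and e: "rank n K a = rank n K b" and ne: "a \<noteq> b"
    then show False using lin[OF a b ne] rank_mono[OF a b, where K=K] rank_mono[OF b a, where K=K] by auto
  qed
  define \<tau> where "\<tau> a = (if a \<in> {1..n} then rank n K a else a)" for a
  have "\<tau> ` {1..n} = {1..n}"
  proof (rule endo_inj_surj)
    show "\<tau> ` {1..n} \<subseteq> {1..n}" using rng unfolding \<tau>_def by auto
    show "inj_on \<tau> {1..n}" using inj inj_on_cong[of "{1..n}" \<tau> "rank n K"] by (simp add: \<tau>_def)
  qed simp
  then have bij: "bij_betw \<tau> {1..n} {1..n}"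
    unfolding bij_betw_def using inj inj_on_cong[of "{1..n}" \<tau> "rank n K"] by (simp add: \<tau>_def)
  have tp: "\<tau> permutes {1..n}"
  proof (rule bij_imp_permutes[OF bij])
    fix x assume "x \<notin> {1..n}" then show "\<tau> x = x" unfolding \<tau>_def by (simp only: if_False)
  qed
  define \<sigma> where "\<sigma> = inv \<tau>"
  have sp: "\<sigma> permutes {1..n}" unfolding \<sigma>_def by (rule permutes_inv[OF tp])
  have "incr n K \<sigma>" unfolding incr_def
  proof
    fix i assume i: "i \<in> {1..n-1}"
    have "i \<in> {1..n}" "Suc i \<in> {1..n}" using i by auto
    then have a: "\<sigma> i \<in> {1..n}" "\<sigma> (Suc i) \<in> {1..n}" using perm_range[OF sp] by blast+
    have "\<tau> (\<sigma> i) = i" "\<tau> (\<sigma> (Suc i)) = Suc i" unfolding \<sigma>_def using permutes_inverses(1)[OF tp] by auto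
    then have r: "rank n K (\<sigma> i) = i" "rank n K (\<sigma> (Suc i)) = Suc i" using a unfolding \<tau>_def by auto
    have ne: "\<sigma> i \<noteq> \<sigma> (Suc i)" using r by auto
    show "lex_less (K (\<sigma> i)) (K (\<sigma> (Suc i)))"
      using lin[OF a ne] rank_mono[OF a(2) a(1), where K=K] r by auto
  qed
  then show ?thesis using sp by blast
qed

lemma key_inj_on: "eqlen n S \<Longrightarrow> inj_on (key R n S) {1..n}"
  using key_inj by (metis inj_onI)

lemma Zmap_key: "key R n (Zmap R n \<sigma> S) a = card {j \<in> Des R n S \<sigma>. j < inv \<sigma> a} # key R n S a"
  unfolding key_def Zmap_def by simp

lemma Zmap_order:
  assumes sp: "\<sigma> permutes {1..n}" and el: "eqlen n S" and a: "a \<in> {1..n}" and b: "b \<in> {1..n}"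
  shows "lex_less (key R n (Zmap R n \<sigma> S) a) (key R n (Zmap R n \<sigma> S) b) \<longleftrightarrow> inv \<sigma> a < inv \<sigma> b"
proof -
  define D where "D = Des R n S \<sigma>"
  define K where "K = key R n S"
  define d where "d x = card {j\<in>D. j < x}" for x
  have DK: "D = {i\<in>{1..n-1}. lex_less (K (\<sigma> (Suc i))) (K (\<sigma> i))}"
    unfolding D_def K_def by (rule Des_key[OF sp el])
  have fD: "finite D" unfolding DK by simp
  have kinj: "inj_on K {1..n}" unfolding K_def by (rule key_inj_on[OF el])
  have key': "key R n (Zmap R n \<sigma> S) x = d (inv \<sigma> x) # K x" for x
    unfolding Zmap_key d_def D_def K_def ..
  have main: "lex_less (d i # K (\<sigma> i)) (d j # K (\<sigma> j))"
    if ij: "i < j" "i \<in> {1..n}" "j \<in> {1..n}" for i j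
  proof -
    have sub: "{t\<in>D. t < i} \<subseteq> {t\<in>D. t < j}" using ij(1) by auto
    have le: "d i \<le> d j" unfolding d_def by (rule card_mono) (use fD sub in auto)
    show ?thesis
    proof (cases "d i < d j")
      case True then show ?thesis by simp
    next
      case False
      then have eq: "d i = d j" using le by simp
      have "{t\<in>D. t < j} = {t\<in>D. t < i} \<union> {t\<in>D. i \<le> t \<and> t < j}" using ij(1) by auto
      moreover have "{t\<in>D. t < i} \<inter> {t\<in>D. i \<le> t \<and> t < j} = {}" by auto
      ultimately have "d j = d i + card {t\<in>D. i \<le> t \<and> t < j}"
        unfolding d_def using fD by (simp add: card_Un_disjoint)
      then have emp: "{t\<in>D. i \<le> t \<and> t < j} = {}" using eq fD by simp
      have "lex_less (K (\<sigma> t)) (K (\<sigma> (Suc t)))" if t: "i \<le> t" "t < j" for t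
      proof -
        have tn: "t \<in> {1..n-1}" using t ij by auto
        then have "t \<notin> D" using emp t by auto
        then have nl: "\<not> lex_less (K (\<sigma> (Suc t))) (K (\<sigma> t))" using tn DK by auto
        have "t \<in> {1..n}" "Suc t \<in> {1..n}" using tn by auto
        then have m: "\<sigma> t \<in> {1..n}" "\<sigma> (Suc t) \<in> {1..n}" using perm_range[OF sp] by blast+
        have "\<sigma> t \<noteq> \<sigma> (Suc t)" using permutes_inj[OF sp] by (metis injD n_not_Suc_n)
        then have "K (\<sigma> t) \<noteq> K (\<sigma> (Suc t))" using kinj m inj_onD by metis
        then show ?thesis using nl lex_less_total by metis
      qed
      then have "lex_less (K (\<sigma> i)) (K (\<sigma> j))" using chain_lex[of i j K \<sigma>] ij by blast
      then show ?thesis using eq by simp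
    qed
  qed
  define i where "i = inv \<sigma> a"
  define j where "j = inv \<sigma> b"
  have ai: "a = \<sigma> i" "b = \<sigma> j" unfolding i_def j_def using permutes_inverses(1)[OF sp] by auto
  have ij: "i \<in> {1..n}" "j \<in> {1..n}" using ai a b perm_range_inv[OF sp] by metis+
  show ?thesis
  proof -
    have "lex_less (d i # K (\<sigma> i)) (d j # K (\<sigma> j)) \<longleftrightarrow> i < j"
    proof
      assume l: "lex_less (d i # K (\<sigma> i)) (d j # K (\<sigma> j))"
      show "i < j"
      proof (rule ccontr)
        assume "\<not> i < j"
        then have "j = i \<or> j < i" by auto
        then show False
        proof
          assume "j = i" then show False using l lex_less_irrefl by metis
        next
          assume "j < i" then show False using main[of j i] ij l lex_less_asym by blast
        qed
      qed
    qed (use main ij in auto)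
    then show ?thesis unfolding key' i_def[symmetric] j_def[symmetric] using ai by simp
  qed
qed


lemma Zseq_len: "length (Zseq R n qs i a) = i"
  by (induct i arbitrary: a) (auto simp: Zmap_def)

lemma Zseq_eqlen: "eqlen n (Zseq R n qs i)"
  unfolding eqlen_def by (simp add: Zseq_len)

lemma Zseq_prefix: "(\<And>j. j < i \<Longrightarrow> qs ! j = qs' ! j) \<Longrightarrow> Zseq R n qs i = Zseq R n qs' i"
  by (induct i) auto

definition lvl :: "nat set \<Rightarrow> nat \<Rightarrow> (nat \<Rightarrow> nat list) \<Rightarrow> (nat \<Rightarrow> nat) list \<Rightarrow> nat \<Rightarrow> bool" where
  "lvl R n v qs i \<longleftrightarrow> qs ! i permutes {1..n} \<and>
     incr n (\<lambda>a. v a ! i # key R n (Zseq R n qs i) a) (qs ! i)"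

definition rk :: "nat set \<Rightarrow> nat \<Rightarrow> (nat \<Rightarrow> nat list) \<Rightarrow> nat \<Rightarrow> nat \<Rightarrow> nat list" where
  "rk R n v i a = rev (take i (v a)) @ tlk R n a"

lemma cons_key_inj:
  "inj_on (\<lambda>a. x a # key R n (Zseq R n qs i) a) {1..n}"
proof -
  have ki: "inj_on (key R n (Zseq R n qs i)) {1..n}" by (rule key_inj_on[OF Zseq_eqlen])
  show ?thesis
  proof (rule inj_onI)
    fix a b assume "a \<in> {1..n}" "b \<in> {1..n}" "x a # key R n (Zseq R n qs i) a = x b # key R n (Zseq R n qs i) b"
    then show "a = b" using inj_onD[OF ki] by simp
  qed
qed

lemma level_order:
  assumes "\<And>i'. i' < i \<Longrightarrow> lvl R n v qs i'" "i \<le> k" "\<forall>a\<in>{1..n}. length (v a) = k"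
    "a \<in> {1..n}" "b \<in> {1..n}"
  shows "lex_less (key R n (Zseq R n qs i) a) (key R n (Zseq R n qs i) b) \<longleftrightarrow>
         lex_less (rk R n v i a) (rk R n v i b)"
  using assms(1,2,4,5)
proof (induct i arbitrary: a b)
  case 0
  then show ?case by (simp add: key_def rk_def)
next
  case (Suc i)
  define \<sigma> where "\<sigma> = qs ! i"
  define K where "K a = v a ! i # key R n (Zseq R n qs i) a" for a
  have l: "lvl R n v qs i" using Suc(2) by simp
  then have sp: "\<sigma> permutes {1..n}" and inc: "incr n K \<sigma>"
    unfolding lvl_def \<sigma>_def K_def by auto
  have ia: "inv \<sigma> a \<in> {1..n}" "inv \<sigma> b \<in> {1..n}"
    using Suc(4,5) perm_range[OF permutes_inv[OF sp]] by auto
  have "lex_less (key R n (Zseq R n qs (Suc i)) a) (key R n (Zseq R n qs (Suc i)) b)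
        \<longleftrightarrow> inv \<sigma> a < inv \<sigma> b"
    unfolding Zseq.simps \<sigma>_def[symmetric] by (rule Zmap_order[OF sp Zseq_eqlen Suc(4,5)])
  also have "\<dots> \<longleftrightarrow> lex_less (K (\<sigma> (inv \<sigma> a))) (K (\<sigma> (inv \<sigma> b)))"
    using incr_iff[OF inc ia] by simp
  also have "\<dots> \<longleftrightarrow> lex_less (K a) (K b)"
    using permutes_inverses(1)[OF sp] by simp
  also have "\<dots> \<longleftrightarrow> lex_less (v a ! i # rk R n v i a) (v b ! i # rk R n v i b)"
    unfolding K_def using Suc(1)[of a b] Suc(2-5) by simp
  also have "\<dots> \<longleftrightarrow> lex_less (rk R n v (Suc i) a) (rk R n v (Suc i) b)"
  proof -
    have "i < length (v a)" "i < length (v b)" using Suc(3,4,5) assms(3) by auto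
    then show ?thesis unfolding rk_def by (simp add: take_Suc_conv_app_nth)
  qed
  finally show ?case .
qed

lemma levels_unique:
  assumes "length qs = k" "length qs' = k" "\<And>i. i < k \<Longrightarrow> lvl R n v qs i"
    "\<And>i. i < k \<Longrightarrow> lvl R n v qs' i"
  shows "qs = qs'"
proof -
  have "\<forall>j<i. qs ! j = qs' ! j" if "i \<le> k" for i
    using that
  proof (induct i)
    case 0 then show ?case by simp
  next
    case (Suc i)
    then have IH: "\<forall>j<i. qs ! j = qs' ! j" by simp
    have Z: "Zseq R n qs i = Zseq R n qs' i" by (rule Zseq_prefix) (use IH in auto)
    have "qs ! i = qs' ! i"
      using assms(3)[of i] assms(4)[of i] Suc(2) unfolding lvl_def Z
      by (intro sort_unique) auto
    then show ?case using IH less_Suc_eq by auto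
  qed
  from this[of k] have "\<forall>j<k. qs ! j = qs' ! j" by simp
  then show ?thesis using assms(1,2) by (intro nth_equalityI) auto
qed

fun bld :: "nat set \<Rightarrow> nat \<Rightarrow> (nat \<Rightarrow> nat list) \<Rightarrow> nat \<Rightarrow> (nat \<Rightarrow> nat) list" where
  "bld R n v 0 = []"
| "bld R n v (Suc i) = bld R n v i @
     [SOME \<sigma>. \<sigma> permutes {1..n} \<and> incr n (\<lambda>a. v a ! i # key R n (Zseq R n (bld R n v i) i) a) \<sigma>]"

lemma bld_len: "length (bld R n v i) = i"
  by (induct i) auto

lemma bld_prefix: "j < i \<Longrightarrow> bld R n v i ! j = bld R n v (Suc j) ! j"
proof (induct i)
  case 0 then show ?case by simp
next
  case (Suc i)
  then show ?case by (cases "j = i") (auto simp: nth_append bld_len)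
qed

lemma bld_lvl: "j < i \<Longrightarrow> lvl R n v (bld R n v i) j"
proof -
  assume ji: "j < i"
  have Z: "Zseq R n (bld R n v i) j = Zseq R n (bld R n v j) j"
    by (rule Zseq_prefix) (metis bld_prefix ji order.strict_trans)
  have Z2: "Zseq R n (bld R n v (Suc j)) j = Zseq R n (bld R n v j) j"
    by (rule Zseq_prefix) (metis bld_prefix less_SucI)
  have "\<exists>\<sigma>. \<sigma> permutes {1..n} \<and> incr n (\<lambda>a. v a ! j # key R n (Zseq R n (bld R n v j) j) a) \<sigma>"
    by (rule sort_exists[OF cons_key_inj])
  then have "(SOME \<sigma>. \<sigma> permutes {1..n} \<and> incr n (\<lambda>a. v a ! j # key R n (Zseq R n (bld R n v j) j) a) \<sigma>) permutes {1..n} \<and>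
      incr n (\<lambda>a. v a ! j # key R n (Zseq R n (bld R n v j) j) a) (SOME \<sigma>. \<sigma> permutes {1..n} \<and> incr n (\<lambda>a. v a ! j # key R n (Zseq R n (bld R n v j) j) a) \<sigma>)"
    by (rule someI_ex)
  moreover have "bld R n v (Suc j) ! j = (SOME \<sigma>. \<sigma> permutes {1..n} \<and> incr n (\<lambda>a. v a ! j # key R n (Zseq R n (bld R n v j) j) a) \<sigma>)"
    by (simp add: nth_append bld_len)
  ultimately have "bld R n v (Suc j) ! j permutes {1..n} \<and>
      incr n (\<lambda>a. v a ! j # key R n (Zseq R n (bld R n v j) j) a) (bld R n v (Suc j) ! j)"
    by simp
  then show ?thesis unfolding lvl_def Z bld_prefix[OF ji] .
qed

definition vcond :: "nat set \<Rightarrow> nat \<Rightarrow> (nat \<Rightarrow> nat list) \<Rightarrow> bool" where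
  "vcond R n v \<longleftrightarrow> (\<forall>j\<in>{1..n-1}. lex_less (rev (v j)) (rev (v (Suc j))) \<or> (v j = v (Suc j) \<and> j \<notin> R))"

lemma tlk_step: "lex_less (tlk R n j) (tlk R n (Suc j)) \<longleftrightarrow> j \<notin> R" if "Suc j \<le> n"
  using that bs_le[of R j] by (auto simp: tlk_def)

lemma last_level:
  assumes k: "k \<ge> 1" and len: "length qs = k" and lv: "\<And>i. i < k \<Longrightarrow> lvl R n v qs i"
    and vl: "\<forall>a\<in>{1..n}. length (v a) = k"
  shows "qs ! (k - 1) = id \<longleftrightarrow> vcond R n v"
proof -
  define K where "K a = v a ! (k - 1) # key R n (Zseq R n qs (k - 1)) a" for a
  have l: "lvl R n v qs (k - 1)" using lv k by simp
  then have sp: "qs ! (k - 1) permutes {1..n}" and inc: "incr n K (qs ! (k - 1))"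
    unfolding lvl_def K_def by auto
  have step: "lex_less (K j) (K (Suc j)) \<longleftrightarrow> lex_less (rev (v j)) (rev (v (Suc j))) \<or> (v j = v (Suc j) \<and> j \<notin> R)"
    if j: "j \<in> {1..n-1}" for j
  proof -
    have jj: "j \<in> {1..n}" "Suc j \<in> {1..n}" using j by auto
    have lo: "lex_less (key R n (Zseq R n qs (k - 1)) j) (key R n (Zseq R n qs (k - 1)) (Suc j)) \<longleftrightarrow>
        lex_less (rk R n v (k - 1) j) (rk R n v (k - 1) (Suc j))"
      by (rule level_order[OF _ _ vl jj]) (use lv in auto)
    have lj: "length (v j) = k" "length (v (Suc j)) = k" using vl jj by auto
    have "lex_less (K j) (K (Suc j)) \<longleftrightarrow> lex_less (rk R n v k j) (rk R n v k (Suc j))"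
    proof -
      have tk: "take k (v j) = take (k - 1) (v j) @ [v j ! (k - 1)]"
               "take k (v (Suc j)) = take (k - 1) (v (Suc j)) @ [v (Suc j) ! (k - 1)]"
        using take_Suc_conv_app_nth[of "k - 1" "v j"] take_Suc_conv_app_nth[of "k - 1" "v (Suc j)"] lj k
        by auto
      show ?thesis unfolding K_def lex_less_Cons_Cons lo unfolding rk_def tk by simp
    qed
    also have "\<dots> \<longleftrightarrow> lex_less (rev (v j)) (rev (v (Suc j))) \<or> (rev (v j) = rev (v (Suc j)) \<and> lex_less (tlk R n j) (tlk R n (Suc j)))"
      unfolding rk_def using lj by (simp add: lex_less_append_same_len)
    also have "\<dots> \<longleftrightarrow> lex_less (rev (v j)) (rev (v (Suc j))) \<or> (v j = v (Suc j) \<and> j \<notin> R)"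
    proof -
      have "Suc j \<le> n" using j by auto
      then show ?thesis using tlk_step[of j n R] by auto
    qed
    finally show ?thesis .
  qed
  have "qs ! (k - 1) = id \<longleftrightarrow> incr n K id"
  proof
    assume "qs ! (k - 1) = id" then show "incr n K id" using inc by simp
  next
    assume "incr n K id"
    then show "qs ! (k - 1) = id" using sort_unique[OF sp inc permutes_id] by simp
  qed
  also have "\<dots> \<longleftrightarrow> vcond R n v" unfolding incr_def vcond_def using step by simp
  finally show ?thesis .
qed


definition Vset :: "nat set \<Rightarrow> nat \<Rightarrow> nat \<Rightarrow> nat list \<Rightarrow> (nat \<Rightarrow> nat list) set" where
  "Vset R n k e = {v \<in> {1..n} \<rightarrow>\<^sub>E {xs. length xs = k}. vcond R n v \<and>
      (\<forall>i<k. (\<Sum>j\<in>{1..n}. v j ! i) = e ! i)}"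

definition Vps :: "nat set \<Rightarrow> nat \<Rightarrow> nat \<Rightarrow> nat list \<Rightarrow> (nat \<Rightarrow> nat) list \<Rightarrow> (nat \<Rightarrow> nat list) set" where
  "Vps R n k e ps = {v \<in> {1..n} \<rightarrow>\<^sub>E {xs. length xs = k}. (\<forall>i<k. lvl R n v (ps @ [id]) i) \<and>
      (\<forall>i<k. (\<Sum>j\<in>{1..n}. v j ! i) = e ! i)}"

lemma finite_perm_tuples: "finite (perm_tuples n m)"
proof -
  have "perm_tuples n m \<subseteq> {ps. set ps \<subseteq> {p. p permutes {1..n}} \<and> length ps = m}"
    unfolding perm_tuples_def by auto
  moreover have "finite {ps. set ps \<subseteq> {p. p permutes {1..n}} \<and> length ps = m}"
    by (rule finite_lists_length_eq) (simp add: finite_permutations)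
  ultimately show ?thesis by (rule finite_subset)
qed

lemma finite_cset: "finite (cset n D m)"
proof -
  have "cset n D m \<subseteq> {1..n} \<rightarrow>\<^sub>E {0..m}"
  proof
    fix h assume h: "h \<in> cset n D m"
    have "h j \<le> m" if "j \<in> {1..n}" for j
    proof -
      have "h j \<le> sum h {1..n}" using that by (intro member_le_sum) auto
      then show ?thesis using h unfolding cset_def by simp
    qed
    then show "h \<in> {1..n} \<rightarrow>\<^sub>E {0..m}" using h unfolding cset_def by auto
  qed
  then show ?thesis by (rule finite_subset) (simp add: finite_PiE)
qed

lemma compat_iff_lvl:
  assumes sp: "\<sigma> permutes {1..n}" and el: "eqlen n S"
  shows "compat n (Des R n S \<sigma>) (\<lambda>j. h (\<sigma> j)) \<longleftrightarrow> incr n (\<lambda>a. h a # key R n S a) \<sigma>"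
proof -
  have D: "Des R n S \<sigma> = {i\<in>{1..n-1}. lex_less (key R n S (\<sigma> (Suc i))) (key R n S (\<sigma> i))}"
    by (rule Des_key[OF sp el])
  have "(h (\<sigma> j) \<le> h (\<sigma> (Suc j)) \<and> (j \<in> Des R n S \<sigma> \<longrightarrow> h (\<sigma> j) < h (\<sigma> (Suc j)))) \<longleftrightarrow>
        lex_less (h (\<sigma> j) # key R n S (\<sigma> j)) (h (\<sigma> (Suc j)) # key R n S (\<sigma> (Suc j)))"
    if j: "j \<in> {1..n-1}" for j
  proof -
    have "j \<in> {1..n}" "Suc j \<in> {1..n}" using j by auto
    then have m: "\<sigma> j \<in> {1..n}" "\<sigma> (Suc j) \<in> {1..n}" using perm_range[OF sp] by blast+
    have "\<sigma> j \<noteq> \<sigma> (Suc j)" using permutes_inj[OF sp] by (metis injD n_not_Suc_n)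
    then have ne: "key R n S (\<sigma> j) \<noteq> key R n S (\<sigma> (Suc j))" using key_inj[OF el m] by metis
    have jD: "j \<in> Des R n S \<sigma> \<longleftrightarrow> lex_less (key R n S (\<sigma> (Suc j))) (key R n S (\<sigma> j))"
      unfolding D using j by simp
    have t: "lex_less (key R n S (\<sigma> j)) (key R n S (\<sigma> (Suc j))) \<longleftrightarrow> \<not> lex_less (key R n S (\<sigma> (Suc j))) (key R n S (\<sigma> j))"
      using ne lex_less_total lex_less_asym by metis
    show ?thesis unfolding jD lex_less_Cons_Cons t by auto
  qed
  then show ?thesis unfolding compat_def incr_def by auto
qed

lemma lvl_iff_compat:
  assumes "qs ! i permutes {1..n}"
  shows "lvl R n v qs i \<longleftrightarrow>
    compat n (Des R n (Zseq R n qs i) (qs ! i)) (\<lambda>j. v ((qs ! i) j) ! i)"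
  unfolding lvl_def using compat_iff_lvl[OF assms Zseq_eqlen[of n R qs i], of R "\<lambda>a. v a ! i"] assms by simp

lemma compat_cong: "(\<And>j. j \<in> {1..n} \<Longrightarrow> h j = h' j) \<Longrightarrow> compat n D h \<longleftrightarrow> compat n D h'"
proof -
  assume a: "\<And>j. j \<in> {1..n} \<Longrightarrow> h j = h' j"
  have "h j = h' j \<and> h (Suc j) = h' (Suc j)" if "j \<in> {1..n-1}" for j
    using a[of j] a[of "Suc j"] that by auto
  then show ?thesis unfolding compat_def by auto
qed

lemma qs_perm:
  assumes "ps \<in> perm_tuples n (k - 1)" "k \<ge> 1" "i < k"
  shows "(ps @ [id]) ! i permutes {1..n}"
proof (cases "i < k - 1")
  case True
  then have "(ps @ [id]) ! i = ps ! i" using assms(1) unfolding perm_tuples_def by (simp add: nth_append)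
  moreover have "ps ! i \<in> set ps" using True assms(1) unfolding perm_tuples_def by auto
  ultimately show ?thesis using assms(1) unfolding perm_tuples_def by auto
next
  case False
  then have "(ps @ [id]) ! i = id" using assms unfolding perm_tuples_def by (simp add: nth_append)
  then show ?thesis by (simp add: permutes_id)
qed

lemma card_Vps:
  assumes ps: "ps \<in> perm_tuples n (k - 1)" and k: "k \<ge> 1"
  shows "finite (Vps R n k e ps) \<and> card (Vps R n k e ps) =
    (\<Prod>i\<in>{0..<k}. card (cset n (Des R n (Zseq R n (ps @ [id]) i) ((ps @ [id]) ! i)) (e ! i)))"
proof -
  define qs where "qs = ps @ [id]"
  define DD where "DD i = Des R n (Zseq R n qs i) (qs ! i)" for i
  have sp: "qs ! i permutes {1..n}" if "i < k" for i unfolding qs_def by (rule qs_perm[OF ps k that])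
  define T where "T = (\<Pi>\<^sub>E i\<in>{0..<k}. cset n (DD i) (e ! i))"
  define \<Phi> where "\<Phi> v = (\<lambda>i\<in>{0..<k}. \<lambda>j\<in>{1..n}. v ((qs ! i) j) ! i)" for v :: "nat \<Rightarrow> nat list"
  define \<Psi> where "\<Psi> H = (\<lambda>a\<in>{1..n}. map (\<lambda>i. H i (inv (qs ! i) a)) [0..<k])" for H :: "nat \<Rightarrow> nat \<Rightarrow> nat"
  have V: "Vps R n k e ps = {v \<in> {1..n} \<rightarrow>\<^sub>E {xs. length xs = k}.
      (\<forall>i<k. compat n (DD i) (\<lambda>j. v ((qs ! i) j) ! i)) \<and> (\<forall>i<k. (\<Sum>j\<in>{1..n}. v j ! i) = e ! i)}"
    unfolding Vps_def qs_def[symmetric] DD_def using lvl_iff_compat[OF sp] by auto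
  have sumr: "(\<Sum>j\<in>{1..n}. g ((qs ! i) j)) = (\<Sum>a\<in>{1..n}. g a)" if "i < k" for g :: "nat \<Rightarrow> nat" and i
    by (rule sum.reindex_bij_betw[OF permutes_imp_bij[OF sp[OF that]]])
  have bij: "bij_betw \<Phi> (Vps R n k e ps) T"
  proof (rule bij_betw_byWitness[where f' = \<Psi>])
    show "\<forall>v\<in>Vps R n k e ps. \<Psi> (\<Phi> v) = v"
    proof
      fix v assume v: "v \<in> Vps R n k e ps"
      show "\<Psi> (\<Phi> v) = v"
      proof
        fix a show "\<Psi> (\<Phi> v) a = v a"
        proof (cases "a \<in> {1..n}")
          case True
          have l: "length (v a) = k" using v True unfolding Vps_def by auto
          have "map (\<lambda>i. \<Phi> v i (inv (qs ! i) a)) [0..<k] = map (\<lambda>i. v a ! i) [0..<k]"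
          proof (rule map_cong[OF refl])
            fix i assume "i \<in> set [0..<k]"
            then have i: "i < k" by simp
            have ia: "inv (qs ! i) a \<in> {1..n}" using perm_range[OF permutes_inv[OF sp[OF i]] True] .
            show "\<Phi> v i (inv (qs ! i) a) = v a ! i"
              unfolding \<Phi>_def using i ia permutes_inverses(1)[OF sp[OF i]] by simp
          qed
          also have "\<dots> = v a" using l by (metis map_nth)
          finally show ?thesis unfolding \<Psi>_def using True by simp
        next
          case False
          then show ?thesis using v unfolding \<Psi>_def Vps_def by (auto simp: PiE_def extensional_def)
        qed
      qed
    qed
    show "\<forall>H\<in>T. \<Phi> (\<Psi> H) = H"
    proof
      fix H assume H: "H \<in> T"
      show "\<Phi> (\<Psi> H) = H"
      proof
        fix i show "\<Phi> (\<Psi> H) i = H i"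
        proof (cases "i < k")
          case True
          have Hi: "H i \<in> {1..n} \<rightarrow>\<^sub>E UNIV" using H True unfolding T_def cset_def by auto
          show ?thesis
          proof
            fix j show "\<Phi> (\<Psi> H) i j = H i j"
            proof (cases "j \<in> {1..n}")
              case jn: True
              have "(qs ! i) j \<in> {1..n}" using perm_range[OF sp[OF True] jn] .
              then show ?thesis unfolding \<Phi>_def \<Psi>_def using True jn permutes_inverses(2)[OF sp[OF True]] by simp
            next
              case False
              then show ?thesis unfolding \<Phi>_def using True Hi by (auto simp: PiE_def extensional_def)
            qed
          qed
        next
          case False
          then show ?thesis using H unfolding \<Phi>_def T_def by (auto simp: PiE_def extensional_def)
        qed
      qed
    qed
    show "\<Phi> ` Vps R n k e ps \<subseteq> T"
    proof
      fix H assume "H \<in> \<Phi> ` Vps R n k e ps"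
      then obtain v where v: "v \<in> Vps R n k e ps" and Hv: "H = \<Phi> v" by auto
      have "\<Phi> v i \<in> cset n (DD i) (e ! i)" if i: "i < k" for i
      proof -
        have ev: "\<Phi> v i = (\<lambda>j\<in>{1..n}. v ((qs ! i) j) ! i)" unfolding \<Phi>_def using i by simp
        have c: "compat n (DD i) (\<lambda>j. v ((qs ! i) j) ! i)" using v i unfolding V by auto
        have c': "compat n (DD i) (\<Phi> v i)" unfolding ev using c compat_cong[of n "\<lambda>j\<in>{1..n}. v ((qs ! i) j) ! i" "\<lambda>j. v ((qs ! i) j) ! i"] by simp
        have "(\<Sum>j\<in>{1..n}. \<Phi> v i j) = (\<Sum>j\<in>{1..n}. v ((qs ! i) j) ! i)" unfolding ev by simp
        also have "\<dots> = (\<Sum>a\<in>{1..n}. v a ! i)" using sumr[OF i, of "\<lambda>a. v a ! i"] .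
        also have "\<dots> = e ! i" using v i unfolding V by auto
        finally show ?thesis unfolding cset_def using c' ev by auto
      qed
      then show "H \<in> T" unfolding Hv T_def \<Phi>_def by auto
    qed
    show "\<Psi> ` T \<subseteq> Vps R n k e ps"
    proof
      fix v assume "v \<in> \<Psi> ` T"
      then obtain H where H: "H \<in> T" and vH: "v = \<Psi> H" by auto
      have Hc: "H i \<in> cset n (DD i) (e ! i)" if "i < k" for i using H that unfolding T_def by auto
      have pe: "v \<in> {1..n} \<rightarrow>\<^sub>E {xs. length xs = k}" unfolding vH \<Psi>_def by auto
      have vv: "v ((qs ! i) j) ! i = H i j" if i: "i < k" and j: "j \<in> {1..n}" for i j
      proof -
        have "(qs ! i) j \<in> {1..n}" using perm_range[OF sp[OF i] j] .
        then show ?thesis unfolding vH \<Psi>_def using i permutes_inverses(2)[OF sp[OF i]] by simp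
      qed
      have "compat n (DD i) (\<lambda>j. v ((qs ! i) j) ! i)" if i: "i < k" for i
        using Hc[OF i] compat_cong[of n "\<lambda>j. v ((qs ! i) j) ! i" "H i" "DD i"] vv[OF i]
        unfolding cset_def by auto
      moreover have "(\<Sum>j\<in>{1..n}. v j ! i) = e ! i" if i: "i < k" for i
      proof -
        have "(\<Sum>j\<in>{1..n}. v j ! i) = (\<Sum>j\<in>{1..n}. v ((qs ! i) j) ! i)" using sumr[OF i, of "\<lambda>a. v a ! i"] by simp
        also have "\<dots> = (\<Sum>j\<in>{1..n}. H i j)" using vv[OF i] by simp
        finally show ?thesis using Hc[OF i] unfolding cset_def by simp
      qed
      ultimately show "v \<in> Vps R n k e ps" unfolding V using pe by auto
    qed
  qed
  have fT: "finite T" unfolding T_def by (rule finite_PiE) (auto simp: finite_cset)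
  have "card T = (\<Prod>i\<in>{0..<k}. card (cset n (DD i) (e ! i)))" unfolding T_def by (simp add: card_PiE)
  then show ?thesis using bij bij_betw_same_card bij_betw_finite fT unfolding DD_def qs_def by metis
qed

lemma comaj_vec_nth:
  "i < k \<Longrightarrow> comaj_vec R n k ps ! i = cmj n (Des R n (Zseq R n (ps @ [id]) i) ((ps @ [id]) ! i))"
  unfolding comaj_vec_def Comaj_def cmj_def Let_def by simp

lemma length_comaj_vec: "length (comaj_vec R n k ps) = k"
  unfolding comaj_vec_def Let_def by simp

lemma Des_sub: "Des R n S \<sigma> \<subseteq> {1..n-1}"
  unfolding Des_def by auto

lemma Vset_UN:
  assumes k: "k \<ge> 1"
  shows "Vset R n k e = (\<Union>ps\<in>perm_tuples n (k - 1). Vps R n k e ps)"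
proof (intro set_eqI iffI)
  fix v assume v: "v \<in> Vset R n k e"
  have vl: "\<forall>a\<in>{1..n}. length (v a) = k" using v unfolding Vset_def by auto
  define qs where "qs = bld R n v k"
  have ql: "length qs = k" unfolding qs_def by (simp add: bld_len)
  have lv: "\<And>i. i < k \<Longrightarrow> lvl R n v qs i" unfolding qs_def by (rule bld_lvl)
  have last: "qs ! (k - 1) = id" using last_level[OF k ql lv vl] v unfolding Vset_def by auto
  define ps where "ps = take (k - 1) qs"
  have qps: "qs = ps @ [id]"
  proof -
    have "qs = take (k - 1) qs @ [qs ! (k - 1)]" using ql k
      by (metis One_nat_def Suc_pred less_eq_Suc_le lessI take_Suc_conv_app_nth take_all_iff order.refl)
    then show ?thesis using last unfolding ps_def by simp
  qed
  have "ps \<in> perm_tuples n (k - 1)"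
  proof -
    have "p permutes {1..n}" if "p \<in> set ps" for p
    proof -
      obtain i where i: "i < length ps" "p = ps ! i" using \<open>p \<in> set ps\<close> by (metis in_set_conv_nth)
      have "i < k" using i ql unfolding ps_def by simp
      then have "qs ! i permutes {1..n}" using lv unfolding lvl_def by simp
      then show ?thesis using i unfolding qps by (simp add: nth_append)
    qed
    moreover have "length ps = k - 1" unfolding ps_def using ql by simp
    ultimately show ?thesis unfolding perm_tuples_def by auto
  qed
  moreover have "v \<in> Vps R n k e ps" using v lv unfolding Vset_def Vps_def qps[symmetric] by auto
  ultimately show "v \<in> (\<Union>ps\<in>perm_tuples n (k - 1). Vps R n k e ps)" by auto
next
  fix v assume "v \<in> (\<Union>ps\<in>perm_tuples n (k - 1). Vps R n k e ps)"
  then obtain ps where ps: "ps \<in> perm_tuples n (k - 1)" and v: "v \<in> Vps R n k e ps" by auto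
  have vl: "\<forall>a\<in>{1..n}. length (v a) = k" using v unfolding Vps_def by auto
  have ql: "length (ps @ [id]) = k" using ps k unfolding perm_tuples_def by simp
  have lv: "\<And>i. i < k \<Longrightarrow> lvl R n v (ps @ [id]) i" using v unfolding Vps_def by auto
  have "(ps @ [id]) ! (k - 1) = id" using ps k unfolding perm_tuples_def by (simp add: nth_append)
  then have "vcond R n v" using last_level[OF k ql lv vl] by simp
  then show "v \<in> Vset R n k e" using v unfolding Vps_def Vset_def by auto
qed

lemma Vps_disjoint:
  assumes k: "k \<ge> 1" and ps: "ps \<in> perm_tuples n (k - 1)" "ps' \<in> perm_tuples n (k - 1)"
    and ne: "ps \<noteq> ps'"
  shows "Vps R n k e ps \<inter> Vps R n k e ps' = {}"
proof (rule ccontr)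
  assume "Vps R n k e ps \<inter> Vps R n k e ps' \<noteq> {}"
  then obtain v where v: "v \<in> Vps R n k e ps" "v \<in> Vps R n k e ps'" by auto
  have "ps @ [id] = ps' @ [id]"
    by (rule levels_unique[of _ k _ R n v]) (use ps k v in \<open>auto simp: perm_tuples_def Vps_def\<close>)
  then show False using ne by simp
qed

definition Pk :: "nat \<Rightarrow> nat \<Rightarrow> nat list \<Rightarrow> nat list \<Rightarrow> nat" where
  "Pk n k e c = (\<Prod>i\<in>{0..<k}. if c ! i \<le> e ! i then wil n (e ! i - c ! i) else 0)"

lemma card_Vset:
  assumes k: "k \<ge> 1"
  shows "card (Vset R n k e) = (\<Sum>ps\<in>perm_tuples n (k - 1). Pk n k e (comaj_vec R n k ps))"
proof -
  have "card (Vset R n k e) = (\<Sum>ps\<in>perm_tuples n (k - 1). card (Vps R n k e ps))"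
    unfolding Vset_UN[OF k]
    by (rule card_UN_disjoint) (use finite_perm_tuples card_Vps[OF _ k] Vps_disjoint[OF k] in auto)
  also have "\<dots> = (\<Sum>ps\<in>perm_tuples n (k - 1). Pk n k e (comaj_vec R n k ps))"
  proof (rule sum.cong[OF refl])
    fix ps assume ps: "ps \<in> perm_tuples n (k - 1)"
    show "card (Vps R n k e ps) = Pk n k e (comaj_vec R n k ps)"
      unfolding card_Vps[OF ps k, THEN conjunct2] Pk_def
      by (rule prod.cong[OF refl]) (simp add: card_cset[OF Des_sub] comaj_vec_nth)
  qed
  finally show ?thesis .
qed


locale slin =
  fixes A :: "'a set" and lt :: "'a \<Rightarrow> 'a \<Rightarrow> bool"
  assumes fin: "finite A"
    and irr: "\<And>a. a \<in> A \<Longrightarrow> \<not> lt a a"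
    and trn: "\<And>a b c. a \<in> A \<Longrightarrow> b \<in> A \<Longrightarrow> c \<in> A \<Longrightarrow> lt a b \<Longrightarrow> lt b c \<Longrightarrow> lt a c"
    and tot: "\<And>a b. a \<in> A \<Longrightarrow> b \<in> A \<Longrightarrow> a \<noteq> b \<Longrightarrow> lt a b \<or> lt b a"
begin

definition rnk :: "'a \<Rightarrow> nat" where
  "rnk a = Suc (card {b\<in>A. lt b a})"

lemma asy: "a \<in> A \<Longrightarrow> b \<in> A \<Longrightarrow> lt a b \<Longrightarrow> \<not> lt b a"
  using trn irr by blast

lemma rnk_mono: "a \<in> A \<Longrightarrow> b \<in> A \<Longrightarrow> lt a b \<Longrightarrow> rnk a < rnk b"
proof -
  assume a: "a \<in> A" and b: "b \<in> A" and l: "lt a b"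
  have "{c\<in>A. lt c a} \<subset> {c\<in>A. lt c b}"
    using a b l trn irr by blast
  then show ?thesis unfolding rnk_def using fin by (simp add: psubset_card_mono)
qed

lemma rnk_less_iff: "a \<in> A \<Longrightarrow> b \<in> A \<Longrightarrow> rnk a < rnk b \<longleftrightarrow> lt a b"
  using rnk_mono tot by (metis less_asym less_irrefl)

lemma rnk_range: "a \<in> A \<Longrightarrow> rnk a \<in> {1..card A}"
proof -
  assume a: "a \<in> A"
  have "{b\<in>A. lt b a} \<subseteq> A - {a}" using irr a by auto
  then have "card {b\<in>A. lt b a} \<le> card (A - {a})" using fin by (intro card_mono) simp_all
  moreover have "card A > 0" using a fin card_gt_0_iff by blast
  ultimately show ?thesis using a fin unfolding rnk_def by (auto simp: card_Diff_singleton)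
qed

lemma rnk_inj: "inj_on rnk A"
proof (rule inj_onI, rule ccontr)
  fix a b assume "a \<in> A" "b \<in> A" "rnk a = rnk b" "a \<noteq> b"
  then show False using tot rnk_mono by (metis less_irrefl)
qed

lemma rnk_bij: "bij_betw rnk A {1..card A}"
proof -
  have "rnk ` A \<subseteq> {1..card A}" using rnk_range by auto
  moreover have "card (rnk ` A) = card {1..card A}" using card_image[OF rnk_inj] by simp
  ultimately have "rnk ` A = {1..card A}" by (intro card_subset_eq) auto
  then show ?thesis using rnk_inj unfolding bij_betw_def by simp
qed

end

lemma partition_mono:
  assumes "is_partition n la" "r' \<le> r" "r < length la"
  shows "la ! r \<le> la ! r'"
proof (cases "r' = r")
  case True then show ?thesis by simp
next
  case False
  then have "r' < r" using assms by simp
  then show ?thesis using assms unfolding is_partition_def by (simp add: sorted_wrt_iff_nth_less)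
qed

lemma cells_down_left:
  assumes "is_partition n la" "(r, j) \<in> cells la" "r' \<le> r" "j' \<le> j"
  shows "(r', j') \<in> cells la"
  using assms partition_mono[OF assms(1) assms(3)] unfolding cells_def by auto

lemma finite_cells: "finite (cells la)"
proof -
  have "cells la \<subseteq> {0..<length la} \<times> {0..<Max (set la \<union> {0})}"
    unfolding cells_def
  proof (clarsimp)
    fix i j assume "i < length la" "j < la ! i"
    moreover have "la ! i \<le> Max (insert 0 (set la))" using \<open>i < length la\<close> by (intro Max_ge) auto
    ultimately show "j < Max (insert 0 (set la))" by linarith
  qed
  then show ?thesis by (rule finite_subset) simp
qed

lemma card_cells: "card (cells la) = sum_list la"
proof (induct la rule: rev_induct)
  case Nil then show ?case by (simp add: cells_def)
next
  case (snoc x la)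
  have "cells (la @ [x]) = cells la \<union> {length la} \<times> {0..<x}"
    unfolding cells_def by (auto simp: nth_append less_Suc_eq)
  moreover have "cells la \<inter> {length la} \<times> {0..<x} = {}" unfolding cells_def by auto
  ultimately have "card (cells (la @ [x])) = card (cells la) + x"
    using finite_cells[of la] by (simp add: card_Un_disjoint card_cartesian_product)
  then show ?case using snoc by simp
qed

lemma card_cells_n: "is_partition n la \<Longrightarrow> card (cells la) = n"
  unfolding is_partition_def using card_cells by simp

lemma ssyt_row_mono:
  assumes "is_ssyt la T" "(r, j') \<in> cells la" "j \<le> j'"
  shows "T (r, j) \<le> T (r, j')"
  using assms(3,2)
proof (induct j' rule: dec_induct)
  case base then show ?case by simp
next
  case (step m)
  have "(r, m) \<in> cells la" using step(4) unfolding cells_def by auto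
  then show ?case using step assms(1) unfolding is_ssyt_def by (meson order_trans)
qed

lemma ssyt_col_strict:
  assumes "is_ssyt la T" "(r', j) \<in> cells la" "r < r'" "is_partition n la"
  shows "T (r, j) < T (r', j)"
  using assms(3,2)
proof (induct r' rule: less_Suc_induct)
  case (1 i) then show ?case using assms(1) unfolding is_ssyt_def by simp
next
  case (2 i j' k)
  then show ?case using cells_down_left[OF assms(4) 2(5), of j' j] by (meson less_imp_le order.refl less_trans)
qed


definition ltT :: "(nat \<times> nat \<Rightarrow> nat) \<Rightarrow> nat \<times> nat \<Rightarrow> nat \<times> nat \<Rightarrow> bool" where
  "ltT T c' c \<longleftrightarrow> T c' < T c \<or> (T c' = T c \<and> snd c' < snd c)"

lemma ssyt_slin:
  assumes "is_ssyt la T" "is_partition n la"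
  shows "slin (cells la) (ltT T)"
proof
  show "finite (cells la)" by (rule finite_cells)
  show "\<And>a. a \<in> cells la \<Longrightarrow> \<not> ltT T a a" unfolding ltT_def by auto
  show "\<And>a b c. ltT T a b \<Longrightarrow> ltT T b c \<Longrightarrow> ltT T a c" unfolding ltT_def by auto
  fix a b assume a: "a \<in> cells la" and b: "b \<in> cells la" and ne: "a \<noteq> b"
  obtain r j r' j' where ab: "a = (r, j)" "b = (r', j')" by (cases a, cases b)
  show "ltT T a b \<or> ltT T b a"
  proof (cases "T a = T b \<and> snd a = snd b")
    case True
    then have jj: "j = j'" and rr: "r \<noteq> r'" using ab ne by auto
    show ?thesis
    proof (cases "r < r'")
      case True
      then have "T a < T b" using ssyt_col_strict[OF assms(1) _ True assms(2)] b ab jj by auto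
      then show ?thesis unfolding ltT_def by auto
    next
      case False
      then have "r' < r" using rr by simp
      then have "T b < T a" using ssyt_col_strict[OF assms(1) _ _ assms(2)] a ab jj by auto
      then show ?thesis unfolding ltT_def by auto
    qed
  next
    case False
    then show ?thesis unfolding ltT_def by auto
  qed
qed

definition std :: "nat list \<Rightarrow> (nat \<times> nat \<Rightarrow> nat) \<Rightarrow> nat \<times> nat \<Rightarrow> nat" where
  "std la T c = (if c \<in> cells la then slin.rnk (cells la) (ltT T) c else 0)"

lemma syt_is_ssyt: "is_syt n la S \<Longrightarrow> is_ssyt la S"
  unfolding is_syt_def is_ssyt_def by (auto intro: less_imp_le)

lemma std_bij:
  assumes "is_ssyt la T" "is_partition n la"
  shows "bij_betw (std la T) (cells la) {1..n}"
proof -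
  interpret slin "cells la" "ltT T" by (rule ssyt_slin[OF assms])
  have "bij_betw rnk (cells la) {1..n}" using rnk_bij card_cells_n[OF assms(2)] by simp
  then show ?thesis by (rule bij_betw_cong[THEN iffD1, rotated]) (simp add: std_def)
qed

lemma std_less_iff:
  assumes "is_ssyt la T" "is_partition n la" "c \<in> cells la" "c' \<in> cells la"
  shows "std la T c' < std la T c \<longleftrightarrow> ltT T c' c"
proof -
  interpret slin "cells la" "ltT T" by (rule ssyt_slin[OF assms(1,2)])
  show ?thesis unfolding std_def using assms(3,4) rnk_less_iff by simp
qed

lemma std_syt:
  assumes "is_ssyt la T" "is_partition n la"
  shows "is_syt n la (std la T)"
  unfolding is_syt_def
proof (intro conjI allI impI)
  show "bij_betw (std la T) (cells la) {1..n}" by (rule std_bij[OF assms])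
  show "std la T c = 0" if "c \<notin> cells la" for c using that unfolding std_def by simp
  fix i j
  show "std la T (i, j) < std la T (i, Suc j)" if c: "(i, Suc j) \<in> cells la"
  proof -
    have c0: "(i, j) \<in> cells la" using c unfolding cells_def by auto
    have "T (i, j) \<le> T (i, Suc j)" using assms(1) c unfolding is_ssyt_def by auto
    then have "ltT T (i, j) (i, Suc j)" unfolding ltT_def by auto
    then show ?thesis using std_less_iff[OF assms c c0] by simp
  qed
  show "std la T (i, j) < std la T (Suc i, j)" if c: "(Suc i, j) \<in> cells la"
  proof -
    have c0: "(i, j) \<in> cells la" using cells_down_left[OF assms(2) c, of i j] by simp
    have "T (i, j) < T (Suc i, j)" using assms(1) c unfolding is_ssyt_def by auto
    then have "ltT T (i, j) (Suc i, j)" unfolding ltT_def by auto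
    then show ?thesis using std_less_iff[OF assms c c0] by simp
  qed
qed

definition cellof :: "nat list \<Rightarrow> (nat \<times> nat \<Rightarrow> nat) \<Rightarrow> nat \<Rightarrow> nat \<times> nat" where
  "cellof la S m = inv_into (cells la) S m"

definition xseq :: "nat list \<Rightarrow> nat \<Rightarrow> (nat \<times> nat \<Rightarrow> nat) \<Rightarrow> nat \<Rightarrow> nat" where
  "xseq la n T = (\<lambda>m\<in>{1..n}. T (cellof la (std la T) m))"

lemma syt_des_cellof: "syt_des n la S = {i\<in>{1..n-1}. fst (cellof la S i) < fst (cellof la S (Suc i))}"
  unfolding syt_des_def cellof_def ..

lemma cellof_props:
  assumes "bij_betw S (cells la) {1..n}"
  shows "\<And>m. m \<in> {1..n} \<Longrightarrow> cellof la S m \<in> cells la"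
    and "\<And>m. m \<in> {1..n} \<Longrightarrow> S (cellof la S m) = m"
    and "\<And>c. c \<in> cells la \<Longrightarrow> cellof la S (S c) = c"
  using assms unfolding cellof_def
  by (auto simp: bij_betw_def inv_into_into f_inv_into_f inv_into_f_f)

lemma xseq_compat:
  assumes T: "is_ssyt la T" and p: "is_partition n la"
  shows "compat n (syt_des n la (std la T)) (xseq la n T)"
  unfolding compat_def
proof
  fix m assume m: "m \<in> {1..n-1}"
  define S where "S = std la T"
  have bS: "bij_betw S (cells la) {1..n}" unfolding S_def by (rule std_bij[OF T p])
  have mm: "m \<in> {1..n}" "Suc m \<in> {1..n}" using m by auto
  define c where "c = cellof la S m"
  define c' where "c' = cellof la S (Suc m)"
  have cc: "c \<in> cells la" "c' \<in> cells la" "S c = m" "S c' = Suc m"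
    unfolding c_def c'_def using cellof_props[OF bS] mm by auto
  have lt: "ltT T c c'" using std_less_iff[OF T p cc(2) cc(1)] cc unfolding S_def by simp
  have x: "xseq la n T m = T c" "xseq la n T (Suc m) = T c'"
    unfolding xseq_def c_def c'_def S_def using mm by auto
  have strict: "T c < T c'" if "m \<in> syt_des n la S"
  proof (rule ccontr)
    assume "\<not> T c < T c'"
    then have eq: "T c = T c'" and cj: "snd c < snd c'" using lt unfolding ltT_def by auto
    have rr: "fst c < fst c'" using that unfolding syt_des_cellof c_def c'_def by simp
    obtain r j where c: "c = (r, j)" by (cases c)
    obtain r' j' where c': "c' = (r', j')" by (cases c')
    have "(r, j') \<in> cells la" using cells_down_left[OF p, of r' j' r j'] cc(2) rr c c' by auto
    then have "T (r, j) \<le> T (r, j')" using ssyt_row_mono[OF T] cj c c' by auto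
    also have "T (r, j') < T (r', j')" using ssyt_col_strict[OF T _ _ p] cc(2) rr c c' by auto
    finally show False using eq c c' by simp
  qed
  show "xseq la n T m \<le> xseq la n T (Suc m) \<and>
        (m \<in> syt_des n la (std la T) \<longrightarrow> xseq la n T m < xseq la n T (Suc m))"
    using lt strict x unfolding ltT_def S_def by auto
qed

lemma xseq_sum:
  assumes T: "is_ssyt la T" and p: "is_partition n la"
  shows "(\<Sum>c\<in>cells la. g (T c)) = (\<Sum>m\<in>{1..n}. g (xseq la n T m))"
proof -
  define S where "S = std la T"
  have bS: "bij_betw S (cells la) {1..n}" unfolding S_def by (rule std_bij[OF T p])
  have "(\<Sum>m\<in>{1..n}. g (xseq la n T m)) = (\<Sum>c\<in>cells la. g (xseq la n T (S c)))"
    by (rule sum.reindex_bij_betw[OF bS, symmetric])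
  also have "\<dots> = (\<Sum>c\<in>cells la. g (T c))"
  proof (rule sum.cong[OF refl])
    fix c assume c: "c \<in> cells la"
    have "S c \<in> {1..n}" using bS c by (auto simp: bij_betw_def)
    then show "g (xseq la n T (S c)) = g (T c)"
      unfolding xseq_def using cellof_props(3)[OF bS c] S_def by simp
  qed
  finally show ?thesis by simp
qed


definition fill :: "nat list \<Rightarrow> (nat \<times> nat \<Rightarrow> nat) \<Rightarrow> (nat \<Rightarrow> nat) \<Rightarrow> nat \<times> nat \<Rightarrow> nat" where
  "fill la S x = (\<lambda>c. if c \<in> cells la then x (S c) else 0)"

lemma compat_mono:
  assumes "compat n D x" "1 \<le> a" "a \<le> b" "b \<le> n"
  shows "x a \<le> x b"
  using assms(3,4)
proof (induct b rule: dec_induct)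
  case base then show ?case by simp
next
  case (step m)
  then have "x m \<le> x (Suc m)" using assms(1,2) unfolding compat_def by auto
  then show ?case using step by simp
qed

lemma compat_strict_between:
  assumes "compat n D x" "1 \<le> a" "a \<le> t" "t < b" "b \<le> n" "t \<in> D"
  shows "x a < x b"
proof -
  have "x a \<le> x t" using compat_mono[OF assms(1,2,3)] assms by simp
  also have "x t < x (Suc t)" using assms unfolding compat_def by auto
  also have "x (Suc t) \<le> x b" using compat_mono[OF assms(1)] assms by simp
  finally show ?thesis .
qed

lemma syt_mono2:
  assumes S: "is_syt n la S" and p: "is_partition n la"
    and c: "(r1, j1) \<in> cells la" and le: "r2 \<le> r1" "j2 \<le> j1"
  shows "S (r2, j2) \<le> S (r1, j1)"
proof -
  have ss: "is_ssyt la S" by (rule syt_is_ssyt[OF S])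
  have c2: "(r1, j2) \<in> cells la" using cells_down_left[OF p c] le by simp
  have "S (r2, j2) \<le> S (r1, j2)"
  proof (cases "r2 = r1")
    case True then show ?thesis by simp
  next
    case False
    then show ?thesis using ssyt_col_strict[OF ss c2 _ p] le by (simp add: less_imp_le)
  qed
  also have "\<dots> \<le> S (r1, j1)" using ssyt_row_mono[OF ss c le(2)] .
  finally show ?thesis .
qed

lemma nondes_step:
  assumes S: "is_syt n la S" and p: "is_partition n la" and t: "t \<in> {1..n-1}"
    and nd: "t \<notin> syt_des n la S"
  shows "fst (cellof la S (Suc t)) \<le> fst (cellof la S t) \<and> snd (cellof la S t) < snd (cellof la S (Suc t))"
proof -
  have bS: "bij_betw S (cells la) {1..n}" using S unfolding is_syt_def by simp
  have tt: "t \<in> {1..n}" "Suc t \<in> {1..n}" using t by auto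
  obtain r1 j1 where c1: "cellof la S t = (r1, j1)" by (cases "cellof la S t")
  obtain r2 j2 where c2: "cellof la S (Suc t) = (r2, j2)" by (cases "cellof la S (Suc t)")
  have r: "r2 \<le> r1" using nd t c1 c2 unfolding syt_des_cellof by auto
  have cin: "(r1, j1) \<in> cells la" "(r2, j2) \<in> cells la" using cellof_props(1)[OF bS] tt c1 c2 by metis+
  have Sv: "S (r1, j1) = t" "S (r2, j2) = Suc t" using cellof_props(2)[OF bS] tt c1 c2 by metis+
  have "j1 < j2"
  proof (rule ccontr)
    assume "\<not> j1 < j2"
    then have "S (r2, j2) \<le> S (r1, j1)" using syt_mono2[OF S p cin(1) r] by simp
    then show False using Sv by simp
  qed
  then show ?thesis using r c1 c2 by simp
qed

lemma nondes_chain: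
  assumes S: "is_syt n la S" and p: "is_partition n la"
    and ab: "1 \<le> a" "a < b" "b \<le> n"
    and nd: "\<And>t. a \<le> t \<Longrightarrow> t < b \<Longrightarrow> t \<notin> syt_des n la S"
  shows "fst (cellof la S b) \<le> fst (cellof la S a) \<and> snd (cellof la S a) < snd (cellof la S b)"
proof -
  have "Suc a \<le> b" using ab by simp
  then show ?thesis using ab(3) nd
  proof (induct b rule: dec_induct)
    case base
    have "a \<in> {1..n-1}" using base ab(1) by auto
    then show ?case using nondes_step[OF S p _ base(2)[of a]] by auto
  next
    case (step m)
    have a: "fst (cellof la S m) \<le> fst (cellof la S a) \<and> snd (cellof la S a) < snd (cellof la S m)"
      using step by auto
    have "m \<in> {1..n-1}" using step ab(1) by auto
    then have b: "fst (cellof la S (Suc m)) \<le> fst (cellof la S m) \<and> snd (cellof la S m) < snd (cellof la S (Suc m))"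
      using nondes_step[OF S p] step by auto
    show ?case using a b by auto
  qed
qed

lemma fill_ssyt:
  assumes S: "is_syt n la S" and p: "is_partition n la" and x: "compat n (syt_des n la S) x"
  shows "is_ssyt la (fill la S x)"
  unfolding is_ssyt_def
proof (intro conjI allI impI)
  have bS: "bij_betw S (cells la) {1..n}" using S unfolding is_syt_def by simp
  show "fill la S x c = 0" if "c \<notin> cells la" for c using that unfolding fill_def by simp
  fix i j
  show "fill la S x (i, j) \<le> fill la S x (i, Suc j)" if c: "(i, Suc j) \<in> cells la"
  proof -
    have c0: "(i, j) \<in> cells la" using c unfolding cells_def by auto
    have "S (i, j) < S (i, Suc j)" using S c unfolding is_syt_def by auto
    moreover have "S (i, j) \<in> {1..n}" "S (i, Suc j) \<in> {1..n}" using bS c c0 by (auto simp: bij_betw_def)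
    ultimately have "x (S (i, j)) \<le> x (S (i, Suc j))" using compat_mono[OF x] by auto
    then show ?thesis unfolding fill_def using c c0 by simp
  qed
  show "fill la S x (i, j) < fill la S x (Suc i, j)" if c: "(Suc i, j) \<in> cells la"
  proof -
    have c0: "(i, j) \<in> cells la" using cells_down_left[OF p c, of i j] by simp
    define a where "a = S (i, j)"
    define b where "b = S (Suc i, j)"
    have ab: "a < b" using S c unfolding is_syt_def a_def b_def by auto
    have abn: "a \<in> {1..n}" "b \<in> {1..n}" using bS c c0 unfolding a_def b_def by (auto simp: bij_betw_def)
    have ca: "cellof la S a = (i, j)" "cellof la S b = (Suc i, j)"
      unfolding a_def b_def using cellof_props(3)[OF bS] c c0 by auto
    have "\<exists>t. a \<le> t \<and> t < b \<and> t \<in> syt_des n la S"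
    proof (rule ccontr)
      assume "\<not> ?thesis"
      then have "fst (cellof la S b) \<le> fst (cellof la S a)"
        using nondes_chain[OF S p _ ab] abn by auto
      then show False using ca by simp
    qed
    then obtain t where "a \<le> t" "t < b" "t \<in> syt_des n la S" by auto
    then have "x a < x b" using compat_strict_between[OF x] abn by auto
    then show ?thesis unfolding fill_def a_def b_def using c c0 by simp
  qed
qed

lemma fill_lt_iff:
  assumes S: "is_syt n la S" and p: "is_partition n la" and x: "compat n (syt_des n la S) x"
    and c: "c \<in> cells la" and c': "c' \<in> cells la"
  shows "ltT (fill la S x) c' c \<longleftrightarrow> S c' < S c"
proof -
  have bS: "bij_betw S (cells la) {1..n}" using S unfolding is_syt_def by simp
  have key: "ltT (fill la S x) d' d" if d: "d \<in> cells la" and d': "d' \<in> cells la" and l: "S d' < S d" for d d'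
  proof -
    define a where "a = S d'"
    define b where "b = S d"
    have abn: "a \<in> {1..n}" "b \<in> {1..n}" using bS d d' unfolding a_def b_def by (auto simp: bij_betw_def)
    have ca: "cellof la S a = d'" "cellof la S b = d" unfolding a_def b_def using cellof_props(3)[OF bS] d d' by auto
    have le: "x a \<le> x b" using compat_mono[OF x] abn l unfolding a_def b_def by auto
    show ?thesis
    proof (cases "x a < x b")
      case True then show ?thesis unfolding ltT_def fill_def using d d' a_def b_def by auto
    next
      case False
      then have eq: "x a = x b" using le by simp
      have "\<forall>t. a \<le> t \<and> t < b \<longrightarrow> t \<notin> syt_des n la S"
        using compat_strict_between[OF x] abn eq by (metis atLeastAtMost_iff less_irrefl)
      then have "snd d' < snd d" using nondes_chain[OF S p _ l[folded a_def b_def]] abn ca by auto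
      then show ?thesis unfolding ltT_def fill_def using d d' eq a_def b_def by auto
    qed
  qed
  show ?thesis
  proof
    assume l: "ltT (fill la S x) c' c"
    show "S c' < S c"
    proof (rule ccontr)
      assume "\<not> S c' < S c"
      then have "S c < S c' \<or> S c = S c'" by auto
      then show False
      proof
        assume "S c < S c'"
        then have "ltT (fill la S x) c c'" using key[OF c' c] by simp
        then show False using l unfolding ltT_def by auto
      next
        assume "S c = S c'"
        then have "c = c'" using bS c c' by (auto simp: bij_betw_def dest: inj_onD)
        then show False using l unfolding ltT_def by auto
      qed
    qed
  qed (rule key[OF c c'])
qed

lemma std_fill:
  assumes S: "is_syt n la S" and p: "is_partition n la" and x: "compat n (syt_des n la S) x"
  shows "std la (fill la S x) = S"
proof
  fix c
  have bS: "bij_betw S (cells la) {1..n}" using S unfolding is_syt_def by simp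
  show "std la (fill la S x) c = S c"
  proof (cases "c \<in> cells la")
    case False
    then show ?thesis using S unfolding std_def is_syt_def by (cases c) simp
  next
    case True
    interpret slin "cells la" "ltT (fill la S x)" by (rule ssyt_slin[OF fill_ssyt[OF S p x] p])
    have "{c'\<in>cells la. ltT (fill la S x) c' c} = {c'\<in>cells la. S c' < S c}"
      using fill_lt_iff[OF S p x True] by auto
    moreover have "card {c'\<in>cells la. S c' < S c} = S c - 1"
    proof -
      have "S ` {c'\<in>cells la. S c' < S c} = {1..<S c}"
      proof
        show "S ` {c'\<in>cells la. S c' < S c} \<subseteq> {1..<S c}" using bS by (auto simp: bij_betw_def)
        show "{1..<S c} \<subseteq> S ` {c'\<in>cells la. S c' < S c}"
        proof
          fix m assume m: "m \<in> {1..<S c}"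
          have "S c \<le> n" using bS True by (auto simp: bij_betw_def)
          then have "m \<in> {1..n}" using m by auto
          then have "cellof la S m \<in> cells la" "S (cellof la S m) = m" using cellof_props[OF bS] by auto
          then show "m \<in> S ` {c'\<in>cells la. S c' < S c}" using m by force
        qed
      qed
      moreover have "inj_on S {c'\<in>cells la. S c' < S c}"
        using bS by (auto simp: bij_betw_def intro: inj_on_subset)
      ultimately show ?thesis using card_image by fastforce
    qed
    moreover have "S c \<ge> 1" using bS True by (auto simp: bij_betw_def)
    ultimately show ?thesis unfolding std_def rnk_def using True by simp
  qed
qed

lemma xseq_fill:
  assumes S: "is_syt n la S" and p: "is_partition n la" and x: "compat n (syt_des n la S) x"
  shows "xseq la n (fill la S x) = restrict x {1..n}"
proof
  fix m
  have bS: "bij_betw S (cells la) {1..n}" using S unfolding is_syt_def by simp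
  show "xseq la n (fill la S x) m = restrict x {1..n} m"
    unfolding xseq_def std_fill[OF S p x] using cellof_props[OF bS] by (simp add: fill_def)
qed

lemma fill_std:
  assumes T: "is_ssyt la T" and p: "is_partition n la"
  shows "fill la (std la T) (xseq la n T) = T"
proof
  fix c
  have bS: "bij_betw (std la T) (cells la) {1..n}" by (rule std_bij[OF T p])
  show "fill la (std la T) (xseq la n T) c = T c"
  proof (cases "c \<in> cells la")
    case True
    have "std la T c \<in> {1..n}" using bS True by (auto simp: bij_betw_def)
    then show ?thesis unfolding fill_def xseq_def using True cellof_props(3)[OF bS True] by simp
  next
    case False
    then show ?thesis using T unfolding fill_def is_ssyt_def by (cases c) simp
  qed
qed


lemma finite_SYT: "finite (SYT n la)"
proof -
  have inj: "inj_on (\<lambda>T. restrict T (cells la)) (SYT n la)"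
  proof (rule inj_onI)
    fix S T assume S: "S \<in> SYT n la" and T: "T \<in> SYT n la" and e: "restrict S (cells la) = restrict T (cells la)"
    show "S = T"
    proof
      fix c show "S c = T c"
      proof (cases "c \<in> cells la")
        case True then show ?thesis using e by (metis restrict_apply')
      next
        case False then show ?thesis using S T unfolding SYT_def is_syt_def by (cases c) simp
      qed
    qed
  qed
  have "(\<lambda>T. restrict T (cells la)) ` SYT n la \<subseteq> cells la \<rightarrow>\<^sub>E {1..n}"
    unfolding SYT_def is_syt_def by (auto simp: bij_betw_def)
  then have "finite ((\<lambda>T. restrict T (cells la)) ` SYT n la)"
    by (rule finite_subset) (simp add: finite_PiE finite_cells)
  then show ?thesis using finite_imageD[OF _ inj] by simp
qed

definition SSw :: "nat list \<Rightarrow> nat \<Rightarrow> (nat \<Rightarrow> nat list) \<Rightarrow> nat list \<Rightarrow> (nat \<times> nat \<Rightarrow> nat) set" where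
  "SSw la k W a = {T. is_ssyt la T \<and> (\<forall>i<k. (\<Sum>c\<in>cells la. W (T c) ! i) = a ! i)}"

definition XSw :: "nat \<Rightarrow> nat set \<Rightarrow> nat \<Rightarrow> (nat \<Rightarrow> nat list) \<Rightarrow> nat list \<Rightarrow> (nat \<Rightarrow> nat) set" where
  "XSw n D k W a = {x \<in> {1..n} \<rightarrow>\<^sub>E UNIV. compat n D x \<and> (\<forall>i<k. (\<Sum>m\<in>{1..n}. W (x m) ! i) = a ! i)}"

lemma std_count:
  assumes p: "is_partition n la" and fin: "\<And>S. S \<in> SYT n la \<Longrightarrow> finite (XSw n (syt_des n la S) k W a)"
  shows "card (SSw la k W a) = (\<Sum>S\<in>SYT n la. card (XSw n (syt_des n la S) k W a))"
proof -
  have bij: "bij_betw (\<lambda>T. (std la T, xseq la n T)) (SSw la k W a) (SIGMA S:SYT n la. XSw n (syt_des n la S) k W a)"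
  proof (rule bij_betw_byWitness[where f' = "\<lambda>(S, x). fill la S x"])
    show "\<forall>T\<in>SSw la k W a. (\<lambda>(S, x). fill la S x) (std la T, xseq la n T) = T"
      using fill_std[OF _ p] unfolding SSw_def by auto
    show "\<forall>Sx\<in>(SIGMA S:SYT n la. XSw n (syt_des n la S) k W a). (\<lambda>T. (std la T, xseq la n T)) ((\<lambda>(S, x). fill la S x) Sx) = Sx"
    proof
      fix Sx assume "Sx \<in> (SIGMA S:SYT n la. XSw n (syt_des n la S) k W a)"
      then obtain S x where Sx: "Sx = (S, x)" and S: "is_syt n la S" and x: "x \<in> XSw n (syt_des n la S) k W a"
        unfolding SYT_def by auto
      have c: "compat n (syt_des n la S) x" and xe: "x \<in> {1..n} \<rightarrow>\<^sub>E UNIV" using x unfolding XSw_def by auto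
      have "restrict x {1..n} = x" using xe by (simp add: restrict_PiE_iff PiE_restrict)
      then show "(\<lambda>T. (std la T, xseq la n T)) ((\<lambda>(S, x). fill la S x) Sx) = Sx"
        unfolding Sx using std_fill[OF S p c] xseq_fill[OF S p c] by simp
    qed
    show "(\<lambda>T. (std la T, xseq la n T)) ` SSw la k W a \<subseteq> (SIGMA S:SYT n la. XSw n (syt_des n la S) k W a)"
    proof
      fix y assume "y \<in> (\<lambda>T. (std la T, xseq la n T)) ` SSw la k W a"
      then obtain T where T: "T \<in> SSw la k W a" and y: "y = (std la T, xseq la n T)" by auto
      have Ts: "is_ssyt la T" using T unfolding SSw_def by simp
      have "std la T \<in> SYT n la" using std_syt[OF Ts p] unfolding SYT_def by simp
      moreover have "xseq la n T \<in> XSw n (syt_des n la (std la T)) k W a"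
        unfolding XSw_def using xseq_compat[OF Ts p] xseq_sum[OF Ts p, of "\<lambda>v. W v ! _"] T
        unfolding SSw_def by (auto simp: xseq_def)
      ultimately show "y \<in> (SIGMA S:SYT n la. XSw n (syt_des n la S) k W a)" using y by simp
    qed
    show "(\<lambda>(S, x). fill la S x) ` (SIGMA S:SYT n la. XSw n (syt_des n la S) k W a) \<subseteq> SSw la k W a"
    proof
      fix T assume "T \<in> (\<lambda>(S, x). fill la S x) ` (SIGMA S:SYT n la. XSw n (syt_des n la S) k W a)"
      then obtain S x where T: "T = fill la S x" and S: "is_syt n la S" and x: "x \<in> XSw n (syt_des n la S) k W a"
        unfolding SYT_def by auto
      have c: "compat n (syt_des n la S) x" using x unfolding XSw_def by auto
      have Ts: "is_ssyt la T" unfolding T by (rule fill_ssyt[OF S p c])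
      have "(\<Sum>c\<in>cells la. W (T c) ! i) = a ! i" if i: "i < k" for i
      proof -
        have "(\<Sum>c\<in>cells la. W (T c) ! i) = (\<Sum>m\<in>{1..n}. W (xseq la n T m) ! i)"
          by (rule xseq_sum[OF Ts p])
        also have "\<dots> = (\<Sum>m\<in>{1..n}. W (x m) ! i)" unfolding T xseq_fill[OF S p c] by simp
        finally show ?thesis using x i unfolding XSw_def by simp
      qed
      then show "T \<in> SSw la k W a" using Ts unfolding SSw_def by simp
    qed
  qed
  have "card (SSw la k W a) = card (SIGMA S:SYT n la. XSw n (syt_des n la S) k W a)"
    by (rule bij_betw_same_card[OF bij])
  also have "\<dots> = (\<Sum>S\<in>SYT n la. card (XSw n (syt_des n la S) k W a))"
    using finite_SYT fin by (simp add: card_SigmaI)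
  finally show ?thesis .
qed


definition pX :: "nat list \<Rightarrow> nat \<Rightarrow> (nat \<times> nat \<Rightarrow> nat) \<Rightarrow> nat \<Rightarrow> nat \<Rightarrow> bool" where
  "pX la x T r j \<longleftrightarrow> T (r, j) = x \<and> (Suc r, j) \<in> cells la \<and> T (Suc r, j) = Suc x"

definition pY :: "nat list \<Rightarrow> nat \<Rightarrow> (nat \<times> nat \<Rightarrow> nat) \<Rightarrow> nat \<Rightarrow> nat \<Rightarrow> bool" where
  "pY la x T r j \<longleftrightarrow> T (r, j) = Suc x \<and> 0 < r \<and> T (r - 1, j) = x"

definition fr :: "nat list \<Rightarrow> nat \<Rightarrow> (nat \<times> nat \<Rightarrow> nat) \<Rightarrow> nat \<Rightarrow> nat \<Rightarrow> bool" where
  "fr la x T r j \<longleftrightarrow> (r, j) \<in> cells la \<and>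
     ((T (r, j) = x \<and> \<not> pX la x T r j) \<or> (T (r, j) = Suc x \<and> \<not> pY la x T r j))"

definition Fr :: "nat list \<Rightarrow> nat \<Rightarrow> (nat \<times> nat \<Rightarrow> nat) \<Rightarrow> nat \<Rightarrow> nat set" where
  "Fr la x T r = {j. fr la x T r j}"

definition FXr :: "nat list \<Rightarrow> nat \<Rightarrow> (nat \<times> nat \<Rightarrow> nat) \<Rightarrow> nat \<Rightarrow> nat set" where
  "FXr la x T r = {j \<in> Fr la x T r. T (r, j) = x}"

definition FYr :: "nat list \<Rightarrow> nat \<Rightarrow> (nat \<times> nat \<Rightarrow> nat) \<Rightarrow> nat \<Rightarrow> nat set" where
  "FYr la x T r = {j \<in> Fr la x T r. T (r, j) = Suc x}"

definition rkf :: "nat list \<Rightarrow> nat \<Rightarrow> (nat \<times> nat \<Rightarrow> nat) \<Rightarrow> nat \<Rightarrow> nat \<Rightarrow> nat" where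
  "rkf la x T r j = card {j' \<in> Fr la x T r. j' < j}"

definition bk :: "nat list \<Rightarrow> nat \<Rightarrow> (nat \<times> nat \<Rightarrow> nat) \<Rightarrow> nat \<times> nat \<Rightarrow> nat" where
  "bk la x T c = (case c of (r, j) \<Rightarrow>
     if fr la x T r j then (if rkf la x T r j < card (FYr la x T r) then x else Suc x) else T (r, j))"

lemma bk_apply: "bk la x T (r, j) =
     (if fr la x T r j then (if rkf la x T r j < card (FYr la x T r) then x else Suc x) else T (r, j))"
  unfolding bk_def by simp

locale bkctx =
  fixes la :: "nat list" and n :: nat and x :: nat and T :: "nat \<times> nat \<Rightarrow> nat"
  assumes p: "is_partition n la" and ss: "is_ssyt la T"
begin

lemma Fr_sub: "Fr la x T r \<subseteq> {0..<la ! r}"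
  unfolding Fr_def fr_def cells_def by auto

lemma Fr_fin: "finite (Fr la x T r)"
  using Fr_sub finite_subset by blast

lemma fr_cell: "fr la x T r j \<Longrightarrow> (r, j) \<in> cells la"
  unfolding fr_def by simp

lemma fr_val: "fr la x T r j \<Longrightarrow> T (r, j) = x \<or> T (r, j) = Suc x"
  unfolding fr_def by auto

lemma out0: "c \<notin> cells la \<Longrightarrow> T c = 0"
  using ss unfolding is_ssyt_def by (cases c) auto

lemma row_le: "(r, j') \<in> cells la \<Longrightarrow> j \<le> j' \<Longrightarrow> T (r, j) \<le> T (r, j')"
  by (rule ssyt_row_mono[OF ss])

lemma col_lt: "(Suc r, j) \<in> cells la \<Longrightarrow> T (r, j) < T (Suc r, j)"
  using ss unfolding is_ssyt_def by auto

lemma cell_up: "(Suc r, j) \<in> cells la \<Longrightarrow> (r, j) \<in> cells la"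
  using cells_down_left[OF p] by auto

lemma cell_left: "(r, j') \<in> cells la \<Longrightarrow> j \<le> j' \<Longrightarrow> (r, j) \<in> cells la"
  unfolding cells_def by auto

lemma pX_left:
  assumes "pX la x T r j" "j' < j" "T (r, j') = x"
  shows "pX la x T r j'"
proof -
  have c: "(Suc r, j') \<in> cells la" using assms(1,2) cells_down_left[OF p, of "Suc r" j "Suc r" j'] unfolding pX_def by auto
  have "T (Suc r, j') \<le> T (Suc r, j)" using row_le[of "Suc r" j j'] assms(1,2) unfolding pX_def by auto
  moreover have "T (r, j') < T (Suc r, j')" using col_lt[OF c] .
  ultimately have "T (Suc r, j') = Suc x" using assms unfolding pX_def by auto
  then show ?thesis using c assms(3) unfolding pX_def by simp
qed

lemma pY_right:
  assumes "pY la x T r j" "j < j'" "(r, j') \<in> cells la" "T (r, j') = Suc x"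
  shows "pY la x T r j'"
proof -
  obtain r' where r: "r = Suc r'" using assms(1) unfolding pY_def by (cases r) auto
  have c: "(r', j') \<in> cells la" using cell_up assms(3) r by simp
  have "T (r', j) \<le> T (r', j')" using row_le[OF c] assms(2) by simp
  moreover have "T (r', j') < T (Suc r', j')" using col_lt assms(3) r by simp
  ultimately have "T (r', j') = x" using assms r unfolding pY_def by auto
  then show ?thesis using assms(4) r unfolding pY_def by simp
qed

lemma both_free: "fr la x T r j \<Longrightarrow> fr la x T (Suc r) j \<Longrightarrow> False"
proof -
  assume a: "fr la x T r j" and b: "fr la x T (Suc r) j"
  have c: "(Suc r, j) \<in> cells la" using b unfolding fr_def by simp
  have lt: "T (r, j) < T (Suc r, j)" using col_lt[OF c] .
  then have "T (r, j) = x" "T (Suc r, j) = Suc x" using fr_val[OF a] fr_val[OF b] by auto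
  then show False using a b c unfolding fr_def pX_def pY_def by auto
qed

lemma free_below: "fr la x T r j \<Longrightarrow> (Suc r, j) \<in> cells la \<Longrightarrow> \<not> fr la x T (Suc r) j \<Longrightarrow> Suc x < T (Suc r, j)"
proof -
  assume a: "fr la x T r j" and c: "(Suc r, j) \<in> cells la" and nb: "\<not> fr la x T (Suc r) j"
  have lt: "T (r, j) < T (Suc r, j)" using col_lt[OF c] .
  show ?thesis
  proof (rule ccontr)
    assume "\<not> Suc x < T (Suc r, j)"
    then have "T (r, j) = x" "T (Suc r, j) = Suc x" using fr_val[OF a] lt by auto
    then show False using a c unfolding fr_def pX_def by auto
  qed
qed

lemma free_above: "fr la x T (Suc r) j \<Longrightarrow> \<not> fr la x T r j \<Longrightarrow> T (r, j) < x"
proof -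
  assume b: "fr la x T (Suc r) j" and na: "\<not> fr la x T r j"
  have c: "(Suc r, j) \<in> cells la" using b unfolding fr_def by simp
  have c0: "(r, j) \<in> cells la" using cell_up[OF c] .
  have lt: "T (r, j) < T (Suc r, j)" using col_lt[OF c] .
  show ?thesis
  proof (rule ccontr)
    assume "\<not> T (r, j) < x"
    then have "T (r, j) = x" "T (Suc r, j) = Suc x" using fr_val[OF b] lt by auto
    then show False using b unfolding fr_def pY_def by auto
  qed
qed

lemma rkf_Suc: "fr la x T r j \<Longrightarrow> rkf la x T r (Suc j) = Suc (rkf la x T r j)"
proof -
  assume f: "fr la x T r j"
  have "{j' \<in> Fr la x T r. j' < Suc j} = insert j {j' \<in> Fr la x T r. j' < j}"
    using f unfolding Fr_def by auto
  then show ?thesis unfolding rkf_def using Fr_fin by simp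
qed

lemma free_value:
  assumes f: "fr la x T r j"
  shows "T (r, j) = x \<longleftrightarrow> rkf la x T r j < card (FXr la x T r)"
proof
  assume tx: "T (r, j) = x"
  have "{j' \<in> Fr la x T r. j' < j} \<subseteq> FXr la x T r - {j}"
  proof
    fix j' assume j': "j' \<in> {j' \<in> Fr la x T r. j' < j}"
    then have "T (r, j') \<le> T (r, j)" using row_le fr_cell f by auto
    then have "T (r, j') = x" using j' tx fr_val unfolding Fr_def by fastforce
    then show "j' \<in> FXr la x T r - {j}" using j' unfolding FXr_def by auto
  qed
  then have "rkf la x T r j \<le> card (FXr la x T r - {j})"
    unfolding rkf_def by (intro card_mono) (auto simp: FXr_def intro: finite_subset[OF _ Fr_fin])
  moreover have "j \<in> FXr la x T r" using f tx unfolding FXr_def Fr_def by simp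
  moreover have "finite (FXr la x T r)" unfolding FXr_def using Fr_fin by simp
  ultimately show "rkf la x T r j < card (FXr la x T r)"
    by (metis card_Diff1_less le_less_trans)
next
  assume l: "rkf la x T r j < card (FXr la x T r)"
  show "T (r, j) = x"
  proof (rule ccontr)
    assume "T (r, j) \<noteq> x"
    then have ty: "T (r, j) = Suc x" using fr_val[OF f] by simp
    have "FXr la x T r \<subseteq> {j' \<in> Fr la x T r. j' < j}"
    proof
      fix j' assume j': "j' \<in> FXr la x T r"
      have "j' < j"
      proof (rule ccontr)
        assume "\<not> j' < j"
        then have "T (r, j) \<le> T (r, j')" using row_le j' fr_cell unfolding FXr_def Fr_def by auto
        then show False using ty j' unfolding FXr_def by simp
      qed
      then show "j' \<in> {j' \<in> Fr la x T r. j' < j}" using j' unfolding FXr_def by simp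
    qed
    then have "card (FXr la x T r) \<le> rkf la x T r j"
      unfolding rkf_def by (intro card_mono) (auto intro: finite_subset[OF _ Fr_fin])
    then show False using l by simp
  qed
qed

end


context bkctx
begin

lemma bk_free: "fr la x T r j \<Longrightarrow> bk la x T (r, j) = x \<or> bk la x T (r, j) = Suc x"
  by (simp add: bk_apply)

lemma bk_nonfree: "\<not> fr la x T r j \<Longrightarrow> bk la x T (r, j) = T (r, j)"
  by (simp add: bk_apply)

lemma bk_ssyt: "is_ssyt la (bk la x T)"
  unfolding is_ssyt_def
proof (intro conjI allI impI)
  fix c assume "c \<notin> cells la"
  then show "bk la x T c = 0" using out0 fr_cell by (cases c) (auto simp: bk_apply)
next
  fix i j assume c: "(i, Suc j) \<in> cells la"
  have c0: "(i, j) \<in> cells la" using cell_left[OF c] by simp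
  show "bk la x T (i, j) \<le> bk la x T (i, Suc j)"
  proof (cases "fr la x T i j")
    case f1: True
    show ?thesis
    proof (cases "fr la x T i (Suc j)")
      case True
      then show ?thesis using rkf_Suc[OF f1] f1 by (auto simp: bk_apply)
    next
      case False
      have ge: "Suc x \<le> T (i, Suc j)"
      proof (rule ccontr)
        assume "\<not> Suc x \<le> T (i, Suc j)"
        moreover have "T (i, j) \<le> T (i, Suc j)" using row_le[OF c] by simp
        ultimately have tx: "T (i, Suc j) = x" "T (i, j) = x" using fr_val[OF f1] by auto
        then have "pX la x T i (Suc j)" using False c unfolding fr_def by auto
        then have "pX la x T i j" using pX_left tx by auto
        then show False using f1 tx unfolding fr_def by auto
      qed
      then show ?thesis using f1 False by (auto simp: bk_apply)
    qed
  next
    case nf1: False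
    show ?thesis
    proof (cases "fr la x T i (Suc j)")
      case f2: True
      have "T (i, j) \<le> x"
      proof (rule ccontr)
        assume "\<not> T (i, j) \<le> x"
        moreover have "T (i, j) \<le> T (i, Suc j)" using row_le[OF c] by simp
        ultimately have ty: "T (i, j) = Suc x" "T (i, Suc j) = Suc x" using fr_val[OF f2] by auto
        then have "pY la x T i j" using nf1 c0 unfolding fr_def by auto
        then have "pY la x T i (Suc j)" using pY_right c ty by auto
        then show False using f2 ty unfolding fr_def by auto
      qed
      then show ?thesis using nf1 f2 by (auto simp: bk_apply)
    next
      case False
      then show ?thesis using nf1 row_le[OF c] by (simp add: bk_apply)
    qed
  qed
next
  fix i j assume c: "(Suc i, j) \<in> cells la"
  show "bk la x T (i, j) < bk la x T (Suc i, j)"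
  proof (cases "fr la x T i j")
    case f1: True
    show ?thesis
    proof (cases "fr la x T (Suc i) j")
      case True then show ?thesis using both_free f1 by blast
    next
      case False
      then show ?thesis using free_below[OF f1 c False] f1 by (auto simp: bk_apply)
    qed
  next
    case nf1: False
    show ?thesis
    proof (cases "fr la x T (Suc i) j")
      case True
      then show ?thesis using free_above[OF True nf1] nf1 by (auto simp: bk_apply)
    next
      case False
      then show ?thesis using nf1 col_lt[OF c] by (simp add: bk_apply)
    qed
  qed
qed

lemma fr_bk: "fr la x (bk la x T) r j \<longleftrightarrow> fr la x T r j"
proof
  assume f: "fr la x T r j"
  have c: "(r, j) \<in> cells la" using fr_cell[OF f] .
  show "fr la x (bk la x T) r j"
  proof (cases "bk la x T (r, j) = x")
    case True
    have "\<not> pX la x (bk la x T) r j"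
    proof
      assume px: "pX la x (bk la x T) r j"
      then have c1: "(Suc r, j) \<in> cells la" unfolding pX_def by simp
      have "\<not> fr la x T (Suc r) j" using both_free f by blast
      then show False using free_below[OF f c1] px bk_nonfree unfolding pX_def by fastforce
    qed
    then show ?thesis unfolding fr_def using c True by simp
  next
    case False
    then have by': "bk la x T (r, j) = Suc x" using bk_free[OF f] by simp
    have "\<not> pY la x (bk la x T) r j"
    proof
      assume py: "pY la x (bk la x T) r j"
      then obtain r' where r: "r = Suc r'" unfolding pY_def by (cases r) auto
      have "\<not> fr la x T r' j" using both_free f r by blast
      then show False using free_above[of r' j] f r py bk_nonfree[of r' j] unfolding pY_def by auto
    qed
    then show ?thesis unfolding fr_def using c by' by simp
  qed
next
  assume f: "fr la x (bk la x T) r j"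
  show "fr la x T r j"
  proof (rule ccontr)
    assume nf: "\<not> fr la x T r j"
    then have e: "bk la x T (r, j) = T (r, j)" by (rule bk_nonfree)
    have c: "(r, j) \<in> cells la" using f unfolding fr_def by simp
    have v: "T (r, j) = x \<or> T (r, j) = Suc x" using f e unfolding fr_def by auto
    then show False
    proof
      assume tx: "T (r, j) = x"
      then have px: "pX la x T r j" using nf c unfolding fr_def by auto
      then have c1: "(Suc r, j) \<in> cells la" and ty: "T (Suc r, j) = Suc x" unfolding pX_def by auto
      have "pY la x T (Suc r) j" using ty tx unfolding pY_def by simp
      then have "\<not> fr la x T (Suc r) j" unfolding fr_def using ty by auto
      then have "bk la x T (Suc r, j) = Suc x" using bk_nonfree ty by simp
      then have "pX la x (bk la x T) r j" using e tx c1 unfolding pX_def by simp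
      then show False using f e tx unfolding fr_def by simp
    next
      assume ty: "T (r, j) = Suc x"
      then have py: "pY la x T r j" using nf c unfolding fr_def by auto
      then obtain r' where r: "r = Suc r'" and tx: "T (r', j) = x" unfolding pY_def by (cases r) auto
      have "pX la x T r' j" using tx ty c r unfolding pX_def by simp
      then have "\<not> fr la x T r' j" unfolding fr_def using tx by auto
      then have "bk la x T (r', j) = x" using bk_nonfree tx by simp
      then have "pY la x (bk la x T) r j" using e ty r unfolding pY_def by simp
      then show False using f e ty unfolding fr_def by simp
    qed
  qed
qed

lemma Fr_bk: "Fr la x (bk la x T) r = Fr la x T r"
proof -
  have "\<And>j. fr la x (bk la x T) r j = fr la x T r j" by (rule fr_bk)
  then show ?thesis unfolding Fr_def by blast
qed

lemma rkf_bk: "rkf la x (bk la x T) r j = rkf la x T r j"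
  unfolding rkf_def Fr_bk ..

lemma count_rk:
  assumes "m \<le> card (Fr la x T r)"
  shows "card {j \<in> Fr la x T r. rkf la x T r j < m} = m"
proof -
  interpret slin "Fr la x T r" "(<)" by unfold_locales (auto simp: Fr_fin)
  have rn: "rnk j = Suc (rkf la x T r j)" for j unfolding rnk_def rkf_def ..
  have b: "bij_betw rnk (Fr la x T r) {1..card (Fr la x T r)}" by (rule rnk_bij)
  have "rnk ` {j \<in> Fr la x T r. rkf la x T r j < m} = {1..m}"
  proof
    show "rnk ` {j \<in> Fr la x T r. rkf la x T r j < m} \<subseteq> {1..m}" using rn by auto
    show "{1..m} \<subseteq> rnk ` {j \<in> Fr la x T r. rkf la x T r j < m}"
    proof
      fix t assume t: "t \<in> {1..m}"
      then have "t \<in> {1..card (Fr la x T r)}" using assms by auto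
      then have "t \<in> rnk ` Fr la x T r" using b unfolding bij_betw_def by simp
      then obtain j where j: "j \<in> Fr la x T r" "rnk j = t" by blast
      then show "t \<in> rnk ` {j \<in> Fr la x T r. rkf la x T r j < m}" using t rn by force
    qed
  qed
  moreover have "inj_on rnk {j \<in> Fr la x T r. rkf la x T r j < m}"
    using b unfolding bij_betw_def by (auto intro: inj_on_subset)
  ultimately show ?thesis using card_image by fastforce
qed

lemma card_Fr: "card (Fr la x T r) = card (FXr la x T r) + card (FYr la x T r)"
proof -
  have "Fr la x T r = FXr la x T r \<union> FYr la x T r" unfolding FXr_def FYr_def Fr_def using fr_val by auto
  moreover have "FXr la x T r \<inter> FYr la x T r = {}" unfolding FXr_def FYr_def by auto
  moreover have "finite (FXr la x T r)" "finite (FYr la x T r)" unfolding FXr_def FYr_def using Fr_fin by auto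
  ultimately show ?thesis by (metis card_Un_disjoint)
qed

lemma FYr_bk: "card (FYr la x (bk la x T) r) = card (FXr la x T r)"
proof -
  have "FYr la x (bk la x T) r = Fr la x T r - {j \<in> Fr la x T r. rkf la x T r j < card (FYr la x T r)}"
    unfolding FYr_def[of la x "bk la x T"] Fr_bk by (auto simp: bk_apply Fr_def)
  moreover have "card {j \<in> Fr la x T r. rkf la x T r j < card (FYr la x T r)} = card (FYr la x T r)"
    by (rule count_rk) (simp add: card_Fr)
  ultimately show ?thesis using Fr_fin card_Fr by (simp add: card_Diff_subset)
qed

lemma FXr_bk_count: "card {j \<in> Fr la x T r. bk la x T (r, j) = x} = card (FYr la x T r)"
proof -
  have "{j \<in> Fr la x T r. bk la x T (r, j) = x} = {j \<in> Fr la x T r. rkf la x T r j < card (FYr la x T r)}"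
    by (auto simp: bk_apply Fr_def)
  then show ?thesis using count_rk card_Fr by simp
qed

lemma bk_bk: "bk la x (bk la x T) = T"
proof (rule ext)
  fix c :: "nat \<times> nat"
  obtain r j where c: "c = (r, j)" by (cases c)
  show "bk la x (bk la x T) c = T c"
  proof (cases "fr la x T r j")
    case True
    have "bk la x (bk la x T) (r, j) = (if rkf la x T r j < card (FXr la x T r) then x else Suc x)"
      using True by (simp add: bk_apply fr_bk rkf_bk FYr_bk del: bk_apply[of la x "bk la x T"])
    also have "\<dots> = T (r, j)" using free_value[OF True] fr_val[OF True] by auto
    finally show ?thesis using c by simp
  next
    case False
    then show ?thesis using c fr_bk bk_nonfree by (simp add: bk_apply)
  qed
qed

end


lemma sum_two_vals:
  assumes "finite A" "\<And>a. a \<in> A \<Longrightarrow> f a = u \<or> f a = w"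
  shows "(\<Sum>a\<in>A. g (f a)) = card {a\<in>A. f a = u} * g u + card {a\<in>A. f a \<noteq> u} * (g w :: nat)"
proof -
  have "(\<Sum>a\<in>A. g (f a)) = (\<Sum>a\<in>A. if f a = u then g u else g w)"
    using assms(2) by (intro sum.cong) auto
  also have "\<dots> = card {a\<in>A. f a = u} * g u + card {a\<in>A. f a \<noteq> u} * g w"
    using assms(1) by (simp add: sum.If_cases Int_def)
  finally show ?thesis .
qed

context bkctx
begin

definition Fc where "Fc = {c \<in> cells la. fr la x T (fst c) (snd c)}"
definition Nc where "Nc = cells la - Fc"

lemma Fc_Sigma: "Fc = (SIGMA r:{0..<length la}. Fr la x T r)"
  unfolding Fc_def Fr_def using fr_cell by (auto simp: cells_def)

lemma sum_free:
  fixes g :: "nat \<Rightarrow> nat"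
  shows "(\<Sum>c\<in>Fc. g (bk la x T c)) = (\<Sum>c\<in>Fc. g (transpose x (Suc x) (T c)))"
proof -
  have row: "(\<Sum>j\<in>Fr la x T r. g (bk la x T (r, j))) = (\<Sum>j\<in>Fr la x T r. g (transpose x (Suc x) (T (r, j))))" for r
  proof -
    have v1: "bk la x T (r, j) = x \<or> bk la x T (r, j) = Suc x" if "j \<in> Fr la x T r" for j
      using bk_free that unfolding Fr_def by simp
    have v2: "transpose x (Suc x) (T (r, j)) = Suc x \<or> transpose x (Suc x) (T (r, j)) = x" if "j \<in> Fr la x T r" for j
    proof -
      have "T (r, j) = x \<or> T (r, j) = Suc x" using fr_val that unfolding Fr_def by simp
      then show ?thesis by (auto simp: transpose_def)
    qed
    have e1: "card {j\<in>Fr la x T r. bk la x T (r, j) = x} = card (FYr la x T r)" by (rule FXr_bk_count)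
    have e2: "card {j\<in>Fr la x T r. bk la x T (r, j) \<noteq> x} = card (FXr la x T r)"
    proof -
      have "{j\<in>Fr la x T r. bk la x T (r, j) \<noteq> x} = Fr la x T r - {j\<in>Fr la x T r. bk la x T (r, j) = x}" by auto
      then show ?thesis using e1 card_Fr Fr_fin by (simp add: card_Diff_subset)
    qed
    have e3: "card {j\<in>Fr la x T r. transpose x (Suc x) (T (r, j)) = Suc x} = card (FXr la x T r)"
    proof -
      have "{j\<in>Fr la x T r. transpose x (Suc x) (T (r, j)) = Suc x} = FXr la x T r"
        unfolding FXr_def using fr_val unfolding Fr_def by (auto simp: transpose_def)
      then show ?thesis by simp
    qed
    have e4: "card {j\<in>Fr la x T r. transpose x (Suc x) (T (r, j)) \<noteq> Suc x} = card (FYr la x T r)"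
    proof -
      have "{j\<in>Fr la x T r. transpose x (Suc x) (T (r, j)) \<noteq> Suc x} = FYr la x T r"
        unfolding FYr_def using fr_val unfolding Fr_def by (auto simp: transpose_def)
      then show ?thesis by simp
    qed
    show ?thesis
      using sum_two_vals[OF Fr_fin v1, where g=g] sum_two_vals[OF Fr_fin v2, where g=g] e1 e2 e3 e4 by simp
  qed
  have S: "(\<Sum>c\<in>Fc. h c) = (\<Sum>r\<in>{0..<length la}. \<Sum>j\<in>Fr la x T r. h (r, j))" for h :: "nat \<times> nat \<Rightarrow> nat"
    unfolding Fc_Sigma by (simp add: sum.Sigma Fr_fin split_def)
  show ?thesis unfolding S using row by simp
qed

definition phi where
  "phi c = (if c \<in> Nc \<and> T c = x then (Suc (fst c), snd c)
            else if c \<in> Nc \<and> T c = Suc x then (fst c - 1, snd c) else c)"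

lemma phi_props:
  assumes c: "c \<in> Nc"
  shows "phi c \<in> Nc \<and> phi (phi c) = c \<and> T (phi c) = transpose x (Suc x) (T c)"
proof -
  obtain r j where rj: "c = (r, j)" by (cases c)
  have cc: "(r, j) \<in> cells la" and nf: "\<not> fr la x T r j" using c rj unfolding Nc_def Fc_def by auto
  show ?thesis
  proof (cases "T c = x")
    case True
    then have px: "pX la x T r j" using nf cc rj unfolding fr_def by auto
    then have c1: "(Suc r, j) \<in> cells la" and ty: "T (Suc r, j) = Suc x" unfolding pX_def by auto
    have "pY la x T (Suc r) j" using ty True rj unfolding pY_def by simp
    then have n1: "(Suc r, j) \<in> Nc" using c1 ty unfolding Nc_def Fc_def fr_def by auto
    have p1: "phi c = (Suc r, j)" unfolding phi_def using c True rj by simp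
    have p2: "phi (Suc r, j) = (r, j)" unfolding phi_def using n1 ty by simp
    show ?thesis using p1 p2 n1 ty True rj by simp
  next
    case False
    show ?thesis
    proof (cases "T c = Suc x")
      case True
      then have py: "pY la x T r j" using nf cc rj unfolding fr_def by auto
      then obtain r' where r: "r = Suc r'" and tx: "T (r', j) = x" unfolding pY_def by (cases r) auto
      have c1: "(r', j) \<in> cells la" using cell_up cc r by simp
      have "pX la x T r' j" using tx True rj r cc unfolding pX_def by simp
      then have n1: "(r', j) \<in> Nc" using c1 tx unfolding Nc_def Fc_def fr_def by auto
      have p1: "phi c = (r', j)" unfolding phi_def using c True rj r by simp
      have p2: "phi (r', j) = (r, j)" unfolding phi_def using n1 tx r by simp
      show ?thesis using p1 p2 n1 tx True rj by simp
    next
      case F2: False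
      have "phi c = c" unfolding phi_def using False F2 by simp
      then show ?thesis using c False F2 by (simp add: transpose_def)
    qed
  qed
qed

lemma sum_nonfree:
  fixes g :: "nat \<Rightarrow> nat"
  shows "(\<Sum>c\<in>Nc. g (bk la x T c)) = (\<Sum>c\<in>Nc. g (transpose x (Suc x) (T c)))"
proof -
  have "(\<Sum>c\<in>Nc. g (bk la x T c)) = (\<Sum>c\<in>Nc. g (T c))"
    by (intro sum.cong) (auto simp: Nc_def Fc_def bk_apply)
  also have "\<dots> = (\<Sum>c\<in>Nc. g (T (phi c)))"
  proof (rule sum.reindex_bij_betw[symmetric])
    show "bij_betw phi Nc Nc" by (rule bij_betw_byWitness[where f' = phi]) (use phi_props in auto)
  qed
  also have "\<dots> = (\<Sum>c\<in>Nc. g (transpose x (Suc x) (T c)))"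
    using phi_props by (intro sum.cong) auto
  finally show ?thesis .
qed

lemma content:
  fixes g :: "nat \<Rightarrow> nat"
  shows "(\<Sum>c\<in>cells la. g (bk la x T c)) = (\<Sum>c\<in>cells la. g (transpose x (Suc x) (T c)))"
proof -
  have cu: "cells la = Fc \<union> Nc" "Fc \<inter> Nc = {}" unfolding Nc_def Fc_def by auto
  have fin: "finite Fc" "finite Nc" using finite_cells unfolding Nc_def Fc_def by auto
  show ?thesis unfolding cu(1)
    using sum.union_disjoint[OF fin cu(2), of "\<lambda>c. g (bk la x T c)"]
      sum.union_disjoint[OF fin cu(2), of "\<lambda>c. g (transpose x (Suc x) (T c))"]
      sum_free[of g] sum_nonfree[of g] by simp
qed

end

lemma BK_adj_real:
  assumes p: "is_partition n la"
  shows "card (SSw la k (W \<circ> transpose x (Suc x)) a) = card (SSw la k W a)"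
proof -
  have bij: "bij_betw (bk la x) (SSw la k (W \<circ> transpose x (Suc x)) a) (SSw la k W a)"
  proof (rule bij_betw_byWitness[where f' = "bk la x"])
    show "\<forall>T\<in>SSw la k (W \<circ> transpose x (Suc x)) a. bk la x (bk la x T) = T"
    proof
      fix T assume "T \<in> SSw la k (W \<circ> transpose x (Suc x)) a"
      then interpret bkctx la n x T using p unfolding SSw_def by unfold_locales auto
      show "bk la x (bk la x T) = T" by (rule bk_bk)
    qed
    show "\<forall>T\<in>SSw la k W a. bk la x (bk la x T) = T"
    proof
      fix T assume "T \<in> SSw la k W a"
      then interpret bkctx la n x T using p unfolding SSw_def by unfold_locales auto
      show "bk la x (bk la x T) = T" by (rule bk_bk)
    qed
    show "bk la x ` SSw la k (W \<circ> transpose x (Suc x)) a \<subseteq> SSw la k W a"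
    proof
      fix T' assume "T' \<in> bk la x ` SSw la k (W \<circ> transpose x (Suc x)) a"
      then obtain T where T: "T \<in> SSw la k (W \<circ> transpose x (Suc x)) a" and T': "T' = bk la x T" by auto
      interpret bkctx la n x T using p T unfolding SSw_def by unfold_locales auto
      have "(\<Sum>c\<in>cells la. W (bk la x T c) ! i) = a ! i" if "i < k" for i
        using content[of "\<lambda>v. W v ! i"] T that unfolding SSw_def by simp
      then show "T' \<in> SSw la k W a" unfolding T' SSw_def using bk_ssyt by simp
    qed
    show "bk la x ` SSw la k W a \<subseteq> SSw la k (W \<circ> transpose x (Suc x)) a"
    proof
      fix T' assume "T' \<in> bk la x ` SSw la k W a"
      then obtain T where T: "T \<in> SSw la k W a" and T': "T' = bk la x T" by auto
      interpret bkctx la n x T using p T unfolding SSw_def by unfold_locales auto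
      have "(\<Sum>c\<in>cells la. (W \<circ> transpose x (Suc x)) (bk la x T c) ! i) = a ! i" if "i < k" for i
        using content[of "\<lambda>v. W (transpose x (Suc x) v) ! i"] T that unfolding SSw_def by simp
      then show "T' \<in> SSw la k (W \<circ> transpose x (Suc x)) a" unfolding T' SSw_def using bk_ssyt by simp
    qed
  qed
  then show ?thesis by (rule bij_betw_same_card)
qed


lemma transp_sym_aux:
  assumes pp: "is_partition n la"
  shows "card (SSw la k (W \<circ> transpose x (x + d)) a) = card (SSw la k W a)"
proof (induct d arbitrary: W)
  case 0 then show ?case by simp
next
  case (Suc d)
  show ?case
  proof (cases d)
    case 0 then show ?thesis using BK_adj_real[OF pp, where W=W and x=x and k=k and a=a] unfolding comp_def by simp
  next
    case (Suc d')
    define t where "t = transpose (x + d) (Suc (x + d))"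
    have eq: "transpose x (x + Suc d) = t \<circ> transpose x (x + d) \<circ> t"
      unfolding t_def using Suc by (auto simp: fun_eq_iff transpose_def)
    have "W \<circ> transpose x (x + Suc d) = ((W \<circ> t) \<circ> transpose x (x + d)) \<circ> t"
      unfolding eq by (simp add: comp_assoc)
    then have "card (SSw la k (W \<circ> transpose x (x + Suc d)) a) = card (SSw la k ((W \<circ> t) \<circ> transpose x (x + d)) a)"
      unfolding t_def using BK_adj_real[OF pp, where W="(W \<circ> transpose (x + d) (Suc (x + d))) \<circ> transpose x (x + d)" and x="x + d" and k=k and a=a] by simp
    also have "\<dots> = card (SSw la k (W \<circ> t) a)" by (rule Suc.hyps)
    also have "\<dots> = card (SSw la k W a)" unfolding t_def by (rule BK_adj_real[OF pp])
    finally show ?thesis .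
  qed
qed

lemma transp_sym:
  assumes pp: "is_partition n la"
  shows "card (SSw la k (W \<circ> transpose x y) a) = card (SSw la k W a)"
proof (cases "x \<le> y")
  case True then show ?thesis using transp_sym_aux[OF pp, where d="y - x" and W=W and x=x] by simp
next
  case False
  then have "transpose x y = transpose y (y + (x - y))" by (simp add: transpose_commute)
  then show ?thesis using transp_sym_aux[OF pp, where d="x - y" and W=W and x=y] by simp
qed

lemma perm_sym:
  assumes "p permutes U" "finite U" and pp: "is_partition n la"
  shows "card (SSw la k (W \<circ> p) a) = card (SSw la k W a)"
  using assms(1,2)
proof (induct arbitrary: W rule: permutes_induct)
  case id then show ?case by simp
next
  case (swap x y p)
  have "W \<circ> (transpose x y \<circ> p) = (W \<circ> transpose x y) \<circ> p" by (simp add: comp_assoc)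
  then show ?case using swap(4)[of "W \<circ> transpose x y"] transp_sym[OF pp, where W=W and x=x and y=y and k=k and a=a]
    unfolding comp_def by simp
qed


definition Aset :: "nat \<Rightarrow> nat list \<Rightarrow> nat list set" where
  "Aset k a = {x. length x = k \<and> list_all2 (\<le>) x a}"

lemma finite_Aset: "finite (Aset k a)"
proof -
  have "Aset k a \<subseteq> {x. set x \<subseteq> {0..sum_list a} \<and> length x = k}"
  proof (clarsimp simp: Aset_def)
    fix x y assume l: "list_all2 (\<le>) x a" and y: "y \<in> set x"
    then obtain i where i: "i < length x" "y = x ! i" by (metis in_set_conv_nth)
    have "x ! i \<le> a ! i" using l i list_all2_nthD by blast
    moreover have "a ! i \<le> sum_list a" using i l by (simp add: list_all2_lengthD member_le_sum_list)
    ultimately show "y \<le> sum_list a" using i by simp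
  qed
  then show ?thesis by (rule finite_subset) (rule finite_lists_length_eq, simp)
qed

definition rvl :: "nat list \<Rightarrow> nat list \<Rightarrow> bool" where
  "rvl x y \<longleftrightarrow> lex_less (rev x) (rev y)"

lemma Aset_slin: "slin (Aset k a) rvl"
proof
  show "finite (Aset k a)" by (rule finite_Aset)
  show "\<And>x. \<not> rvl x x" unfolding rvl_def by (simp add: lex_less_irrefl)
  show "\<And>x y z. rvl x y \<Longrightarrow> rvl y z \<Longrightarrow> rvl x z" unfolding rvl_def using lex_less_trans by blast
  show "\<And>x y. x \<noteq> y \<Longrightarrow> rvl x y \<or> rvl y x" unfolding rvl_def using lex_less_linear by fastforce
qed

definition rA :: "nat \<Rightarrow> nat list \<Rightarrow> nat list \<Rightarrow> nat" where
  "rA k a = slin.rnk (Aset k a) rvl"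

definition rinv :: "nat \<Rightarrow> nat list \<Rightarrow> nat \<Rightarrow> nat list" where
  "rinv k a = inv_into (Aset k a) (rA k a)"

lemma rA_bij: "bij_betw (rA k a) (Aset k a) {1..card (Aset k a)}"
proof -
  interpret slin "Aset k a" rvl by (rule Aset_slin)
  show ?thesis unfolding rA_def by (rule rnk_bij)
qed

lemma rA_less: "x \<in> Aset k a \<Longrightarrow> y \<in> Aset k a \<Longrightarrow> rA k a x < rA k a y \<longleftrightarrow> rvl x y"
proof -
  interpret slin "Aset k a" rvl by (rule Aset_slin)
  show "x \<in> Aset k a \<Longrightarrow> y \<in> Aset k a \<Longrightarrow> rA k a x < rA k a y \<longleftrightarrow> rvl x y"
    unfolding rA_def by (rule rnk_less_iff)
qed

lemma rinv_props:
  shows "\<And>m. m \<in> {1..card (Aset k a)} \<Longrightarrow> rinv k a m \<in> Aset k a"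
    and "\<And>m. m \<in> {1..card (Aset k a)} \<Longrightarrow> rA k a (rinv k a m) = m"
    and "\<And>x. x \<in> Aset k a \<Longrightarrow> rinv k a (rA k a x) = x"
  using rA_bij[of k a] unfolding rinv_def
  by (auto simp: bij_betw_def inv_into_into f_inv_into_f inv_into_f_f)

lemma exists_rho:
  assumes en: "bij_betw enum UNIV {xs. length xs = k}"
  shows "\<exists>\<rho> U. finite U \<and> \<rho> permutes U \<and>
     (\<forall>m\<in>{1..card (Aset k a)}. enum (\<rho> m) = rinv k a m) \<and>
     (\<forall>m. m \<notin> {1..card (Aset k a)} \<longrightarrow> enum (\<rho> m) \<notin> Aset k a)"
proof -
  define N where "N = card (Aset k a)"
  define I where "I = {1..N}"
  define M where "M = {m. enum m \<in> Aset k a}"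
  have injE: "inj enum" using en by (simp add: bij_betw_def)
  have AsubR: "Aset k a \<subseteq> range enum" using en unfolding bij_betw_def Aset_def by auto
  have bM: "bij_betw enum M (Aset k a)"
    unfolding bij_betw_def M_def using injE AsubR by (auto simp: inj_on_def)
  have fM: "finite M" using bM finite_Aset bij_betw_finite by blast
  have cM: "card M = N" unfolding N_def using bij_betw_same_card[OF bM] .
  define f where "f m = inv enum (rinv k a m)" for m
  have fM_in: "f m \<in> M" and ef: "enum (f m) = rinv k a m" if "m \<in> I" for m
  proof -
    have r: "rinv k a m \<in> Aset k a" using rinv_props(1) that unfolding I_def N_def by blast
    show "enum (f m) = rinv k a m" unfolding f_def using r AsubR by (simp add: f_inv_into_f subsetD)
    then show "f m \<in> M" unfolding M_def using r by simp
  qed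
  have finj: "inj_on f I"
  proof (rule inj_onI)
    fix x y assume "x \<in> I" "y \<in> I" "f x = f y"
    then have "rinv k a x = rinv k a y" using ef by metis
    then show "x = y" using rinv_props(2) \<open>x \<in> I\<close> \<open>y \<in> I\<close> unfolding I_def N_def by metis
  qed
  have "card (M - I) = card (I - M)"
  proof -
    have "card (M - I) = card M - card (M \<inter> I)" using fM by (simp add: card_Diff_subset_Int)
    moreover have "card (I - M) = card I - card (I \<inter> M)" unfolding I_def by (simp add: card_Diff_subset_Int)
    ultimately show ?thesis using cM unfolding I_def by (simp add: Int_commute)
  qed
  then obtain g where bg: "bij_betw g (M - I) (I - M)"
    using finite_same_card_bij[of "M - I" "I - M"] fM unfolding I_def by auto
  define \<rho> where "\<rho> m = (if m \<in> I then f m else if m \<in> M then g m else m)" for m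
  define U where "U = M \<union> I"
  have fU: "finite U" unfolding U_def I_def using fM by simp
  have rinj: "inj_on \<rho> U"
  proof (rule inj_onI)
    fix x y assume x: "x \<in> U" and y: "y \<in> U" and e: "\<rho> x = \<rho> y"
    have gI: "g z \<in> I - M" if "z \<in> M - I" for z using bg that by (auto simp: bij_betw_def)
    show "x = y"
    proof (cases "x \<in> I")
      case True
      show ?thesis
      proof (cases "y \<in> I")
        case True then show ?thesis using \<open>x \<in> I\<close> e finj unfolding \<rho>_def by (auto dest: inj_onD)
      next
        case False
        then have "y \<in> M - I" using y unfolding U_def by auto
        then show ?thesis using \<open>x \<in> I\<close> e fM_in gI unfolding \<rho>_def by (metis DiffD2 False)
      qed
    next
      case False
      then have xm: "x \<in> M - I" using x unfolding U_def by auto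
      show ?thesis
      proof (cases "y \<in> I")
        case True then show ?thesis using xm e fM_in gI unfolding \<rho>_def by (metis DiffD2 DiffD1)
      next
        case False
        then have "y \<in> M - I" using y unfolding U_def by auto
        then show ?thesis using xm e bg unfolding \<rho>_def by (auto simp: bij_betw_def dest: inj_onD)
      qed
    qed
  qed
  have rimg: "\<rho> ` U \<subseteq> U"
  proof
    fix z assume "z \<in> \<rho> ` U"
    then obtain x where x: "x \<in> U" "z = \<rho> x" by auto
    show "z \<in> U"
    proof (cases "x \<in> I")
      case True then show ?thesis using x fM_in unfolding \<rho>_def U_def by auto
    next
      case False
      then have "x \<in> M - I" using x unfolding U_def by auto
      then have "g x \<in> I - M" using bg by (auto simp: bij_betw_def)
      then show ?thesis using x False unfolding \<rho>_def U_def by auto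
    qed
  qed
  have "\<rho> ` U = U" by (rule endo_inj_surj[OF fU rimg rinj])
  then have "bij_betw \<rho> U U" using rinj by (simp add: bij_betw_def)
  then have rp: "\<rho> permutes U"
    by (rule bij_imp_permutes) (auto simp: \<rho>_def U_def)
  have p1: "\<forall>m\<in>{1..N}. enum (\<rho> m) = rinv k a m" using ef unfolding \<rho>_def I_def by auto
  have p2: "enum (\<rho> m) \<notin> Aset k a" if "m \<notin> {1..N}" for m
  proof (cases "m \<in> M")
    case True
    then have "g m \<in> I - M" using bg that unfolding I_def by (auto simp: bij_betw_def)
    then show ?thesis using True that unfolding \<rho>_def I_def M_def by auto
  next
    case False then show ?thesis using that unfolding \<rho>_def I_def M_def by auto
  qed
  show ?thesis using fU rp p1 p2 unfolding N_def by blast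
qed


lemma finite_Vset: "k \<ge> 1 \<Longrightarrow> finite (Vset R n k e)"
  unfolding Vset_UN by (rule finite_UN_I) (use finite_perm_tuples card_Vps in auto)

lemma sum_Aset:
  fixes n :: nat
  assumes "\<forall>j\<in>{1..n}. length (v j) = k" "length a = k" "\<forall>i<k. (\<Sum>j\<in>{1..n}. v j ! i) = a ! i"
    "j0 \<in> {1..n}"
  shows "v j0 \<in> Aset k a"
proof -
  have "v j0 ! i \<le> a ! i" if "i < k" for i
  proof -
    have "v j0 ! i \<le> (\<Sum>j\<in>{1..n}. v j ! i)" using assms(4) by (intro member_le_sum) auto
    then show ?thesis using assms(3) that by simp
  qed
  then show ?thesis unfolding Aset_def using assms by (auto simp: list_all2_conv_all_nth)
qed

lemma transfer:
  assumes W1: "\<And>m. length (W m) = k" and W2: "\<And>m. m \<in> {1..card (Aset k a)} \<Longrightarrow> W m = rinv k a m"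
    and W3: "\<And>m. m \<notin> {1..card (Aset k a)} \<Longrightarrow> W m \<notin> Aset k a" and la: "length a = k"
  shows "bij_betw (\<lambda>x. \<lambda>j\<in>{1..n}. W (x j)) (XSw n D k W a) (Vset D n k a)"
proof (rule bij_betw_byWitness[where f' = "\<lambda>v. \<lambda>j\<in>{1..n}. rA k a (v j)"])
  define N where "N = card (Aset k a)"
  have xin: "x j \<in> {1..N}" if x: "x \<in> XSw n D k W a" and j: "j \<in> {1..n}" for x j
  proof -
    have "W (x j) \<in> Aset k a"
      by (rule sum_Aset[of n "\<lambda>j. W (x j)" k a]) (use x j W1 la in \<open>auto simp: XSw_def\<close>)
    then show ?thesis using W3 unfolding N_def by blast
  qed
  have vin: "v j \<in> Aset k a" if v: "v \<in> Vset D n k a" and j: "j \<in> {1..n}" for v j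
    by (rule sum_Aset[of n v k a]) (use v j la in \<open>auto simp: Vset_def\<close>)
  show "\<forall>x\<in>XSw n D k W a. (\<lambda>v. \<lambda>j\<in>{1..n}. rA k a (v j)) (\<lambda>j\<in>{1..n}. W (x j)) = x"
  proof
    fix x assume x: "x \<in> XSw n D k W a"
    show "(\<lambda>v. \<lambda>j\<in>{1..n}. rA k a (v j)) (\<lambda>j\<in>{1..n}. W (x j)) = x"
    proof
      fix j show "(\<lambda>v. \<lambda>j\<in>{1..n}. rA k a (v j)) (\<lambda>j\<in>{1..n}. W (x j)) j = x j"
      proof (cases "j \<in> {1..n}")
        case True
        then have "x j \<in> {1..N}" using xin x by auto
        then show ?thesis using True W2 rinv_props(2) unfolding N_def by simp
      next
        case False then show ?thesis using x unfolding XSw_def by (auto simp: PiE_def extensional_def)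
      qed
    qed
  qed
  show "\<forall>v\<in>Vset D n k a. (\<lambda>x. \<lambda>j\<in>{1..n}. W (x j)) (\<lambda>j\<in>{1..n}. rA k a (v j)) = v"
  proof
    fix v assume v: "v \<in> Vset D n k a"
    show "(\<lambda>x. \<lambda>j\<in>{1..n}. W (x j)) (\<lambda>j\<in>{1..n}. rA k a (v j)) = v"
    proof
      fix j show "(\<lambda>x. \<lambda>j\<in>{1..n}. W (x j)) (\<lambda>j\<in>{1..n}. rA k a (v j)) j = v j"
      proof (cases "j \<in> {1..n}")
        case True
        have vj: "v j \<in> Aset k a" using vin v True by auto
        then have "rA k a (v j) \<in> {1..N}" using rA_bij[of k a] unfolding N_def by (auto simp: bij_betw_def)
        then show ?thesis using True W2 rinv_props(3)[OF vj] unfolding N_def by simp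
      next
        case False then show ?thesis using v unfolding Vset_def by (auto simp: PiE_def extensional_def)
      qed
    qed
  qed
  have key: "(x p \<le> x q \<and> (j \<in> D \<longrightarrow> x p < x q)) \<longleftrightarrow>
      (rvl (W (x p)) (W (x q)) \<or> (W (x p) = W (x q) \<and> j \<notin> D))"
    if "x p \<in> {1..N}" "x q \<in> {1..N}" for x p q j
  proof -
    have r: "rinv k a (x p) \<in> Aset k a" "rinv k a (x q) \<in> Aset k a"
      using rinv_props(1) that unfolding N_def by auto
    have "rvl (W (x p)) (W (x q)) \<longleftrightarrow> x p < x q"
      using rA_less[OF r] rinv_props(2) that W2 unfolding N_def by simp
    moreover have "W (x p) = W (x q) \<longleftrightarrow> x p = x q"
      using rinv_props(2) that W2 unfolding N_def by metis
    ultimately show ?thesis by auto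
  qed
  show "(\<lambda>x. \<lambda>j\<in>{1..n}. W (x j)) ` XSw n D k W a \<subseteq> Vset D n k a"
  proof
    fix v assume "v \<in> (\<lambda>x. \<lambda>j\<in>{1..n}. W (x j)) ` XSw n D k W a"
    then obtain x where x: "x \<in> XSw n D k W a" and v: "v = (\<lambda>j\<in>{1..n}. W (x j))" by auto
    have "vcond D n v" unfolding vcond_def
    proof
      fix j assume j: "j \<in> {1..n-1}"
      have jj: "j \<in> {1..n}" "Suc j \<in> {1..n}" using j by auto
      have c: "x j \<le> x (Suc j) \<and> (j \<in> D \<longrightarrow> x j < x (Suc j))" using x j unfolding XSw_def compat_def by auto
      have "rvl (W (x j)) (W (x (Suc j))) \<or> (W (x j) = W (x (Suc j)) \<and> j \<notin> D)"
        using key[of x j "Suc j" j] c xin[OF x jj(1)] xin[OF x jj(2)] by blast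
      then show "lex_less (rev (v j)) (rev (v (Suc j))) \<or> v j = v (Suc j) \<and> j \<notin> D"
        unfolding v rvl_def using jj by simp
    qed
    moreover have "v \<in> {1..n} \<rightarrow>\<^sub>E {xs. length xs = k}" unfolding v using W1 by auto
    moreover have "\<forall>i<k. (\<Sum>j\<in>{1..n}. v j ! i) = a ! i" using x unfolding v XSw_def by simp
    ultimately show "v \<in> Vset D n k a" unfolding Vset_def by simp
  qed
  show "(\<lambda>v. \<lambda>j\<in>{1..n}. rA k a (v j)) ` Vset D n k a \<subseteq> XSw n D k W a"
  proof
    fix x assume "x \<in> (\<lambda>v. \<lambda>j\<in>{1..n}. rA k a (v j)) ` Vset D n k a"
    then obtain v where v: "v \<in> Vset D n k a" and x: "x = (\<lambda>j\<in>{1..n}. rA k a (v j))" by auto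
    have xr: "x j \<in> {1..N}" "W (x j) = v j" if j: "j \<in> {1..n}" for j
    proof -
      have vj: "v j \<in> Aset k a" using vin v j by auto
      show "x j \<in> {1..N}" unfolding x using j vj rA_bij[of k a] unfolding N_def by (auto simp: bij_betw_def)
      then show "W (x j) = v j" using W2 rinv_props(3)[OF vj] j unfolding x N_def by simp
    qed
    have "compat n D x" unfolding compat_def
    proof
      fix j assume j: "j \<in> {1..n-1}"
      have jj: "j \<in> {1..n}" "Suc j \<in> {1..n}" using j by auto
      have "lex_less (rev (v j)) (rev (v (Suc j))) \<or> v j = v (Suc j) \<and> j \<notin> D"
        using v j unfolding Vset_def vcond_def by auto
      then have "rvl (W (x j)) (W (x (Suc j))) \<or> (W (x j) = W (x (Suc j)) \<and> j \<notin> D)"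
        unfolding rvl_def using xr(2)[OF jj(1)] xr(2)[OF jj(2)] by simp
      then show "x j \<le> x (Suc j) \<and> (j \<in> D \<longrightarrow> x j < x (Suc j))"
        using key[of x j "Suc j" j] xr(1)[OF jj(1)] xr(1)[OF jj(2)] by blast
    qed
    moreover have "(\<Sum>j\<in>{1..n}. W (x j) ! i) = a ! i" if i: "i < k" for i
    proof -
      have "(\<Sum>j\<in>{1..n}. W (x j) ! i) = (\<Sum>j\<in>{1..n}. v j ! i)" using xr(2) by simp
      then show ?thesis using v i unfolding Vset_def by simp
    qed
    moreover have "x \<in> {1..n} \<rightarrow>\<^sub>E UNIV" unfolding x by simp
    ultimately show "x \<in> XSw n D k W a" unfolding XSw_def by simp
  qed
qed

lemma schur_expand:
  assumes p: "is_partition n la" and k: "k \<ge> 1" and en: "bij_betw enum UNIV {xs. length xs = k}"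
    and la: "length a = k"
  shows "card (SSw la k enum a) =
    (\<Sum>S\<in>SYT n la. \<Sum>ps\<in>perm_tuples n (k - 1). Pk n k a (comaj_vec (syt_des n la S) n k ps))"
proof -
  obtain \<rho> U where U: "finite U" "\<rho> permutes U"
    and r1: "\<forall>m\<in>{1..card (Aset k a)}. enum (\<rho> m) = rinv k a m"
    and r2: "\<forall>m. m \<notin> {1..card (Aset k a)} \<longrightarrow> enum (\<rho> m) \<notin> Aset k a"
    using exists_rho[OF en, of a] by blast
  define W where "W = enum \<circ> \<rho>"
  have W1: "length (W m) = k" for m unfolding W_def using en by (auto simp: bij_betw_def)
  have tr: "bij_betw (\<lambda>x. \<lambda>j\<in>{1..n}. W (x j)) (XSw n D k W a) (Vset D n k a)" for D
    by (rule transfer[OF W1]) (use r1 r2 la in \<open>auto simp: W_def\<close>)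
  have "card (SSw la k enum a) = card (SSw la k W a)"
    unfolding W_def by (rule perm_sym[OF U(2,1) p, symmetric])
  also have "\<dots> = (\<Sum>S\<in>SYT n la. card (XSw n (syt_des n la S) k W a))"
  proof (rule std_count[OF p])
    fix S show "finite (XSw n (syt_des n la S) k W a)"
      using tr bij_betw_finite finite_Vset[OF k] by blast
  qed
  also have "\<dots> = (\<Sum>S\<in>SYT n la. card (Vset (syt_des n la S) n k a))"
    using tr bij_betw_same_card by (intro sum.cong) blast+
  also have "\<dots> = (\<Sum>S\<in>SYT n la. \<Sum>ps\<in>perm_tuples n (k - 1). Pk n k a (comaj_vec (syt_des n la S) n k ps))"
    using card_Vset[OF k] by simp
  finally show ?thesis .
qed


lemma sum_Aset_prod:
  fixes F :: "nat \<Rightarrow> nat \<Rightarrow> int"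
  assumes le: "length e = k"
  shows "(\<Sum>a\<in>Aset k e. \<Prod>i\<in>{0..<k}. F i (a ! i)) = (\<Prod>i\<in>{0..<k}. \<Sum>t\<in>{0..e ! i}. F i t)"
proof -
  define P where "P = (\<Pi>\<^sub>E i\<in>{0..<k}. {0..e ! i})"
  have bij: "bij_betw (\<lambda>a. \<lambda>i\<in>{0..<k}. a ! i) (Aset k e) P"
  proof (rule bij_betw_byWitness[where f' = "\<lambda>p. map p [0..<k]"])
    show "\<forall>a\<in>Aset k e. map (\<lambda>i\<in>{0..<k}. a ! i) [0..<k] = a"
      unfolding Aset_def by (auto intro: nth_equalityI)
    show "\<forall>p\<in>P. (\<lambda>i\<in>{0..<k}. map p [0..<k] ! i) = p"
      unfolding P_def by (auto simp: PiE_def extensional_def fun_eq_iff)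
    show "(\<lambda>a. \<lambda>i\<in>{0..<k}. a ! i) ` Aset k e \<subseteq> P"
      unfolding Aset_def P_def using le by (auto simp: list_all2_conv_all_nth)
    show "(\<lambda>p. map p [0..<k]) ` P \<subseteq> Aset k e"
      unfolding Aset_def P_def using le by (auto simp: list_all2_conv_all_nth PiE_def)
  qed
  have "(\<Sum>a\<in>Aset k e. \<Prod>i\<in>{0..<k}. F i (a ! i)) = (\<Sum>p\<in>P. \<Prod>i\<in>{0..<k}. F i (p i))"
  proof -
    have "(\<Sum>p\<in>P. \<Prod>i\<in>{0..<k}. F i (p i)) = (\<Sum>a\<in>Aset k e. \<Prod>i\<in>{0..<k}. F i ((\<lambda>i\<in>{0..<k}. a ! i) i))"
      by (rule sum.reindex_bij_betw[OF bij, symmetric])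
    also have "\<dots> = (\<Sum>a\<in>Aset k e. \<Prod>i\<in>{0..<k}. F i (a ! i))"
      by (intro sum.cong refl prod.cong) auto
    finally show ?thesis by simp
  qed
  also have "\<dots> = (\<Prod>i\<in>{0..<k}. \<Sum>t\<in>{0..e ! i}. F i t)"
    unfolding P_def by (rule prod_sum_PiE[symmetric]) auto
  finally show ?thesis .
qed

lemma inner1:
  "(\<Sum>t\<in>{0..E}. int (if C \<le> t then wil n (t - C) else 0) * coeff (qpoch n) (E - t)) = (if C = E then 1 else 0)"
proof (cases "C \<le> E")
  case False
  have "(\<Sum>t\<in>{0..E}. int (if C \<le> t then wil n (t - C) else 0) * coeff (qpoch n) (E - t)) = 0"
    by (rule sum.neutral) (use False in auto)
  then show ?thesis using False by simp
next
  case True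
  define d where "d = E - C"
  have "(\<Sum>t\<in>{0..E}. int (if C \<le> t then wil n (t - C) else 0) * coeff (qpoch n) (E - t)) =
        (\<Sum>t\<in>{C..E}. int (wil n (t - C)) * coeff (qpoch n) (E - t))"
    by (rule sum.mono_neutral_cong_right) auto
  also have "\<dots> = (\<Sum>s\<in>{0..d}. int (wil n s) * coeff (qpoch n) (d - s))"
  proof -
    have "(\<Sum>s\<in>{0..d}. int (wil n s) * coeff (qpoch n) (d - s)) =
          (\<Sum>t\<in>(\<lambda>s. s + C) ` {0..d}. int (wil n (t - C)) * coeff (qpoch n) (E - t))"
      by (subst sum.reindex) (auto simp: d_def inj_on_def add.commute)
    moreover have "(\<lambda>s. s + C) ` {0..d} = {C..E}" using True unfolding d_def
      by (auto simp: image_iff intro!: exI[where x="_ - C"])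
    ultimately show ?thesis by simp
  qed
  also have "\<dots> = (if d = 0 then 1 else 0)" by (rule wil_conv)
  finally show ?thesis using True unfolding d_def by auto
qed

lemma inner:
  assumes le: "length e = k" and lc: "length c = k"
  shows "(\<Sum>a\<in>Aset k e. int (Pk n k a c) * qpoch_denom k n (map2 (-) e a)) = (if c = e then 1 else 0)"
proof -
  define F where "F i t = int (if c ! i \<le> t then wil n (t - c ! i) else 0) * coeff (qpoch n) (e ! i - t)" for i t
  have "(\<Sum>a\<in>Aset k e. int (Pk n k a c) * qpoch_denom k n (map2 (-) e a)) =
        (\<Sum>a\<in>Aset k e. \<Prod>i\<in>{0..<k}. F i (a ! i))"
  proof (rule sum.cong[OF refl])
    fix a assume a: "a \<in> Aset k e"
    then have la: "length a = k" unfolding Aset_def by simp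
    have "qpoch_denom k n (map2 (-) e a) = (\<Prod>i\<in>{0..<k}. coeff (qpoch n) (e ! i - a ! i))"
      unfolding qpoch_denom_def using la le by (intro prod.cong) auto
    then show "int (Pk n k a c) * qpoch_denom k n (map2 (-) e a) = (\<Prod>i\<in>{0..<k}. F i (a ! i))"
      unfolding Pk_def F_def by (simp add: prod.distrib of_nat_prod)
  qed
  also have "\<dots> = (\<Prod>i\<in>{0..<k}. \<Sum>t\<in>{0..e ! i}. F i t)" by (rule sum_Aset_prod[OF le])
  also have "\<dots> = (\<Prod>i\<in>{0..<k}. if c ! i = e ! i then 1 else 0)"
    unfolding F_def using inner1 by simp
  also have "\<dots> = (if c = e then 1 else 0)"
  proof (cases "c = e")
    case True then show ?thesis by simp
  next
    case False
    then obtain i where i: "i < k" "c ! i \<noteq> e ! i" using le lc nth_equalityI by metis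
    have "(\<Prod>i\<in>{0..<k}. if c ! i = e ! i then 1 else 0) = (0::int)"
      by (rule prod_zero) (use i in auto)
    then show ?thesis using False by simp
  qed
  finally show ?thesis .
qed

theorem theorem2:
  fixes n k :: nat and la :: "nat list" and enum :: "nat \<Rightarrow> nat list" and e :: "nat list"
  assumes "n \<ge> 1" and "k \<ge> 1" and "is_partition n la"
    and "bij_betw enum UNIV {xs. length xs = k}"
    and "length e = k"
  shows "mps_mult k (schur_at la k enum) (qpoch_denom k n) e = numer la k n e"
proof -
  note p = assms(3) and kk = assms(2) and en = assms(4) and le = assms(5)
  define X where "X = SYT n la \<times> perm_tuples n (k - 1)"
  define cv where "cv = (\<lambda>x. comaj_vec (syt_des n la (fst x)) n k (snd x))"
  have fX: "finite X" unfolding X_def using finite_SYT finite_perm_tuples by simp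
  have A: "{a. length a = k \<and> list_all2 (\<le>) a e} = Aset k e" unfolding Aset_def ..
  have sch: "schur_at la k enum a = (\<Sum>x\<in>X. int (Pk n k a (cv x)))" if a: "a \<in> Aset k e" for a
  proof -
    have la: "length a = k" using a unfolding Aset_def by simp
    have "schur_at la k enum a = int (card (SSw la k enum a))" unfolding schur_at_def SSw_def ..
    also have "\<dots> = int (\<Sum>S\<in>SYT n la. \<Sum>ps\<in>perm_tuples n (k - 1). Pk n k a (comaj_vec (syt_des n la S) n k ps))"
      using schur_expand[OF p kk en la] by simp
    also have "\<dots> = (\<Sum>x\<in>X. int (Pk n k a (cv x)))"
      unfolding X_def cv_def by (simp add: sum.cartesian_product of_nat_sum case_prod_beta)
    finally show ?thesis .
  qed
  have "mps_mult k (schur_at la k enum) (qpoch_denom k n) e =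
        (\<Sum>a\<in>Aset k e. (\<Sum>x\<in>X. int (Pk n k a (cv x))) * qpoch_denom k n (map2 (-) e a))"
    unfolding mps_mult_def A using sch by (intro sum.cong) auto
  also have "\<dots> = (\<Sum>x\<in>X. \<Sum>a\<in>Aset k e. int (Pk n k a (cv x)) * qpoch_denom k n (map2 (-) e a))"
    by (simp add: sum_distrib_right sum.swap[of _ "Aset k e"])
  also have "\<dots> = (\<Sum>x\<in>X. if cv x = e then 1 else 0)"
  proof (rule sum.cong[OF refl])
    fix x assume "x \<in> X"
    have "length (cv x) = k" unfolding cv_def by (simp add: length_comaj_vec)
    then show "(\<Sum>a\<in>Aset k e. int (Pk n k a (cv x)) * qpoch_denom k n (map2 (-) e a)) = (if cv x = e then 1 else 0)"
      using inner[OF le] by simp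
  qed
  also have "\<dots> = int (card {x\<in>X. cv x = e})"
    using fX by (simp add: sum.If_cases Int_def)
  also have "{x\<in>X. cv x = e} = {(T, ps). T \<in> SYT n la \<and> ps \<in> perm_tuples n (k - 1)
       \<and> comaj_vec (syt_des n la T) n k ps = e}"
    unfolding X_def cv_def by auto
  finally show ?thesis unfolding numer_def .
qed


end
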